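(* Let $\alpha,\beta,\gamma$ be words over $X$ such that $\alpha\beta\gamma$ has no repeated letters, and let $x$ be a letter of $\beta$. Then $$f[\alpha\beta]\,f[\alpha\gamma]=\sum_{y}s(\beta,xy)\,f[(\alpha\beta)\setminus xy]\,f[\alpha\gamma xy]\;+\;\sum_{y\text{ a letter of }\gamma}s(\beta,x)\,s(\gamma,y)\,f[\alpha\,y\,(\beta\setminus x)]\,f[\alpha\,x\,(\gamma\setminus y)].$$ In the first sum only the letters $y\neq x$ of $\beta$ contribute. Pfaffians of odd-length words are $0$ by convention.
   Context: Setting. Let $X$ be a set and $R$ a commutative ring. Let $f$ assign to each ordered pair $(x,y)\in X\times X$ an element $f[xy]\in R$, subject to $f[xy]=-f[yx]$ and $f[xx]=0$ for all $x,y\in X$. Words. A word is a finite sequence of elements (letters) of $X$. Concatenation is written by juxtaposition, $\epsilon$ is the empty word, and $|\alpha|$ is the length of $\alpha$. For words $\alpha,\beta$, the word $\alpha\setminus\beta$ is obtained from $\alpha$ by deleting every letter that occurs in $\beta$. Sign. For words $\alpha,\beta$, set $s(\alpha,\beta)=0$ if $\alpha$ or $\beta$ has a repeated letter, or if $\beta$ contains a letter not in $\alpha$. Otherwise $s(\alpha,\beta)\in\{\pm1\}$ is the sign of the permutation that rearranges $\alpha$ into the word $\beta(\alpha\setminus\beta)$. In particular, $s(\beta,x)=(-1)^{i-1}$ if $x$ is the $i$-th letter of $\beta$. Pfaffian. Let $\alpha=x_1\ldots x_{2n}$ be a word with distinct letters. Then $$f[\alpha]=\sum s(\alpha,y_1\ldots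 y_{2n})\,f[y_1y_2]\cdots f[y_{2n-1}y_{2n}],$$ where the sum is over the $(2n-1)(2n-3)\cdots1$ partitions of $\{x_1,\ldots,x_{2n}\}$ into pairs $\{y_1,y_2\},\ldots,\{y_{2n-1},y_{2n}\}$. Each term does not depend on the order in which the pairs or their elements are listed. Further conventions: $f[\epsilon]=1$; $f[\alpha]=0$ if $\alpha$ has a repeated letter; and $f[\alpha]=0$ if $|\alpha|$ is odd. *)

theory Defs
  imports "HOL-Combinatorics.Permutations"
begin

text \<open>Words are lists over the alphabet 'a. alpha \ beta deletes from alpha every letter occurring in beta.\<close>
definition wdel :: "'a list \<Rightarrow> 'a list \<Rightarrow> 'a list" where
  "wdel a b = filter (\<lambda>z. z \<notin> set b) a"

text \<open>Sign of the permutation rearranging the distinct word a into the word c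
  (a permutation of a): c ! i = a ! (p i) for i below the length.\<close>
definition rearr_sign :: "'a list \<Rightarrow> 'a list \<Rightarrow> int" where
  "rearr_sign a c = sign (\<lambda>i. if i < length a then (THE j. j < length a \<and> a ! j = c ! i) else i)"

definition ssign :: "'a list \<Rightarrow> 'a list \<Rightarrow> int" where
  "ssign a b = (if distinct a \<and> distinct b \<and> set b \<subseteq> set a
                then rearr_sign a (b @ wdel a b) else 0)"

definition before :: "'a list \<Rightarrow> 'a \<Rightarrow> 'a \<Rightarrow> bool" where
  "before a x y = (\<exists>i j. i < j \<and> j < length a \<and> a ! i = x \<and> a ! j = y)"

text \<open>Canonical listings y1 ... y2n of the partitions of the letters of a into pairs:
  within each pair the first element comes first in a, and the pairs are listed
  by increasing position (in a) of their first elements. Each pair partition has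
  exactly one such listing.\<close>
definition pairings :: "'a list \<Rightarrow> 'a list set" where
  "pairings a = {ys. distinct ys \<and> set ys = set a \<and> length ys = length a \<and>
     (\<forall>i. 2*i+1 < length ys \<longrightarrow> before a (ys ! (2*i)) (ys ! (2*i+1))) \<and>
     (\<forall>i. 2*i+2 < length ys \<longrightarrow> before a (ys ! (2*i)) (ys ! (2*i+2)))}"

definition pf :: "('a \<Rightarrow> 'a \<Rightarrow> 'r::comm_ring_1) \<Rightarrow> 'a list \<Rightarrow> 'r" where
  "pf f a = (if distinct a \<and> even (length a) then
      (\<Sum>ys\<in>pairings a. of_int (ssign a ys) * (\<Prod>i<length a div 2. f (ys ! (2*i)) (ys ! (2*i+1))))
    else 0)"

end

theory Submission
  imports Defs
begin


primrec idx :: "'a list \<Rightarrow> 'a \<Rightarrow> nat" where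
  "idx [] x = 0"
| "idx (y # ys) x = (if y = x then 0 else Suc (idx ys x))"

lemma idx_nth: "distinct xs \<Longrightarrow> i < length xs \<Longrightarrow> idx xs (xs ! i) = i"
proof (induction xs arbitrary: i)
  case (Cons a xs) then show ?case by (cases i) (auto simp: nth_mem)
qed simp

lemma nth_idx: "x \<in> set xs \<Longrightarrow> xs ! idx xs x = x"
  by (induction xs) auto

lemma idx_less: "x \<in> set xs \<Longrightarrow> idx xs x < length xs"
  by (induction xs) auto

lemma idx_append: "idx (l @ r) z = (if z \<in> set l then idx l z else length l + idx r z)"
  by (induction l) auto

lemma idx_inj: "x \<in> set xs \<Longrightarrow> y \<in> set xs \<Longrightarrow> idx xs x = idx xs y \<Longrightarrow> x = y"
  by (metis nth_idx)

lemma idx_remove1: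
  assumes "distinct w" "z \<in> set w" "v \<in> set w" "v \<noteq> z"
  shows "idx (remove1 z w) v = (if idx w z < idx w v then idx w v - 1 else idx w v)"
  using assms
proof (induction w)
  case (Cons a w)
  show ?case
  proof (cases "a = z")
    case True then show ?thesis using Cons by auto
  next
    case False
    then have "z \<in> set w" using Cons by auto
    show ?thesis
    proof (cases "a = v")
      case True then show ?thesis using False by auto
    next
      case False2: False
      then have "v \<in> set w" using Cons by auto
      then show ?thesis using Cons.IH[OF _ \<open>z \<in> set w\<close>] Cons.prems False False2
        using idx_less[of z w] by auto
    qed
  qed
qed simp

lemma idx_map: "inj_on h (set w) \<Longrightarrow> z \<in> set w \<Longrightarrow> idx (map h w) (h z) = idx w z"
  by (induction w) (auto simp: inj_on_def)

lemma remove1_map: "inj_on h (set w) \<Longrightarrow> z \<in> set w \<Longrightarrow> remove1 (h z) (map h w) = map h (remove1 z w)"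
  by (induction w) (auto simp: inj_on_def)

function P :: "('a \<Rightarrow> 'a \<Rightarrow> 'r::comm_ring_1) \<Rightarrow> 'a list \<Rightarrow> 'r" where
  "P f [] = 1"
| "P f (u # w) = (\<Sum>z\<in>set w. (-1) ^ idx w z * f u z * P f (remove1 z w))"
  by pat_completeness auto
termination
  by (relation "measure (\<lambda>(f, l). length l)") (auto simp: length_remove1)

lemma P_odd: "odd (length l) \<Longrightarrow> P f l = 0"
proof (induction f l rule: P.induct)
  case (2 f u w)
  have "P f (remove1 z w) = 0" if "z \<in> set w" for z
  proof -
    have "odd (length (remove1 z w))" using 2(2) that
      by (cases w) (auto simp: length_remove1)
    then show ?thesis using 2(1)[OF that] by simp
  qed
  then show ?case by simp
qed simp

lemma P_map: "inj_on h (set l) \<Longrightarrow> P f (map h l) = P (\<lambda>i j. f (h i) (h j)) l"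
proof (induction "(\<lambda>i j. f (h i) (h j))" l rule: P.induct)
  case (2 u w)
  have inj: "inj_on h (set w)" using 2 by auto
  have "P f (map h (u # w)) = (\<Sum>z\<in>h ` set w. (-1) ^ idx (map h w) z * f (h u) z * P f (remove1 z (map h w)))"
    by simp
  also have "\<dots> = (\<Sum>z\<in>set w. (-1) ^ idx (map h w) (h z) * f (h u) (h z) * P f (remove1 (h z) (map h w)))"
    by (rule sum.reindex[OF inj, unfolded comp_def])
  also have "\<dots> = (\<Sum>z\<in>set w. (-1) ^ idx w z * f (h u) (h z) * P (\<lambda>i j. f (h i) (h j)) (remove1 z w))"
  proof (rule sum.cong[OF refl])
    fix z assume z: "z \<in> set w"
    have "inj_on h (set (remove1 z w))" using inj by (meson inj_on_subset set_remove1_subset)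
    then show "(-1) ^ idx (map h w) (h z) * f (h u) (h z) * P f (remove1 (h z) (map h w)) =
         (-1) ^ idx w z * f (h u) (h z) * P (\<lambda>i j. f (h i) (h j)) (remove1 z w)"
      using 2(1)[OF z] z inj by (simp add: idx_map remove1_map)
  qed
  finally show ?case by simp
qed simp

lemmas P_Cons = P.simps(2)
declare P.simps(2)[simp del]


lemma sum_swap_ne:
  assumes "finite R"
  shows "(\<Sum>z\<in>R. \<Sum>z'\<in>R-{z}. F z z') = (\<Sum>z'\<in>R. \<Sum>z\<in>R-{z'}. F z z')"
proof -
  have e: "(\<Sum>z'\<in>R-{z}. G z') = (\<Sum>z'\<in>R. if z' = z then 0 else G z')" for z and G :: "'a \<Rightarrow> 'b"
    using assms by (simp add: sum.If_cases Diff_eq Compl_eq)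
  have "(\<Sum>z\<in>R. \<Sum>z'\<in>R-{z}. F z z') = (\<Sum>z\<in>R. \<Sum>z'\<in>R. if z' = z then 0 else F z z')"
    by (simp add: e)
  also have "\<dots> = (\<Sum>z'\<in>R. \<Sum>z\<in>R. if z' = z then 0 else F z z')"
    by (rule sum.swap)
  also have "\<dots> = (\<Sum>z'\<in>R. \<Sum>z\<in>R-{z'}. F z z')"
    by (simp add: e eq_commute)
  finally show ?thesis .
qed

lemma neg1_pred: "0 < n \<Longrightarrow> (-1::'r::comm_ring_1) ^ (n - Suc 0) = - ((-1) ^ n)"
  by (cases n) auto

lemma P_swap0:
  fixes f :: "'a \<Rightarrow> 'a \<Rightarrow> 'r::comm_ring_1"
  assumes anti: "\<forall>u v. f u v = - f v u" and d: "distinct (x # y # r)"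
  shows "P f (x # y # r) = - P f (y # x # r)"
proof -
  define R where "R = set r"
  have fin: "finite R" by (simp add: R_def)
  define s where "s z z' = ((-1::'r) ^ (Suc (idx r z) + idx (remove1 z r) z'))" for z z'
  have expand: "P f (a # b # r) = f a b * P f r +
      (\<Sum>z\<in>R. \<Sum>z'\<in>R-{z}. s z z' * (f a z * f b z' * P f (remove1 z' (remove1 z r))))"
    if ab: "a \<notin> set r" "b \<notin> set r" "a \<noteq> b" for a b
  proof -
    have "P f (a # b # r) = (\<Sum>z\<in>insert b R. (-1) ^ idx (b # r) z * f a z * P f (remove1 z (b # r)))"
      by (simp only: P_Cons) (simp add: R_def)
    also have "\<dots> = f a b * P f r + (\<Sum>z\<in>R. (-1) ^ idx (b # r) z * f a z * P f (remove1 z (b # r)))"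
      using ab fin by (simp add: R_def)
    also have "(\<Sum>z\<in>R. (-1) ^ idx (b # r) z * f a z * P f (remove1 z (b # r))) =
        (\<Sum>z\<in>R. \<Sum>z'\<in>R-{z}. s z z' * (f a z * f b z' * P f (remove1 z' (remove1 z r))))"
    proof (rule sum.cong[OF refl])
      fix z assume z: "z \<in> R"
      then have zb: "z \<noteq> b" using ab R_def by auto
      have sr: "set (remove1 z r) = R - {z}" using d by (simp add: R_def)
      have "(-1) ^ idx (b # r) z * f a z * P f (remove1 z (b # r)) =
          (-1) ^ Suc (idx r z) * f a z * (\<Sum>z'\<in>R-{z}. (-1) ^ idx (remove1 z r) z' * f b z' * P f (remove1 z' (remove1 z r)))"
        using zb by (simp add: sr P_Cons)
      also have "\<dots> = (\<Sum>z'\<in>R-{z}. s z z' * (f a z * f b z' * P f (remove1 z' (remove1 z r))))"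
        by (simp add: sum_distrib_left s_def power_add mult_ac)
      finally show "(-1) ^ idx (b # r) z * f a z * P f (remove1 z (b # r)) =
          (\<Sum>z'\<in>R-{z}. s z z' * (f a z * f b z' * P f (remove1 z' (remove1 z r))))" .
    qed
    finally show ?thesis .
  qed
  have santi: "s z' z = - s z z'" if "z \<in> R" "z' \<in> R" "z \<noteq> z'" for z z'
  proof -
    have dr: "distinct r" using d by simp
    have ne: "idx r z \<noteq> idx r z'" using that idx_inj[of z r z'] R_def by auto
    show ?thesis
      using ne idx_remove1[OF dr, of z z'] idx_remove1[OF dr, of z' z] that
      by (auto simp: s_def R_def power_add neg1_pred)
  qed
  have xy: "x \<notin> set r" "y \<notin> set r" "x \<noteq> y" using d by auto
  have "P f (y # x # r) = f y x * P f r +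
      (\<Sum>z\<in>R. \<Sum>z'\<in>R-{z}. s z z' * (f y z * f x z' * P f (remove1 z' (remove1 z r))))"
    using expand[of y x] xy by auto
  also have "(\<Sum>z\<in>R. \<Sum>z'\<in>R-{z}. s z z' * (f y z * f x z' * P f (remove1 z' (remove1 z r)))) =
     (\<Sum>z'\<in>R. \<Sum>z\<in>R-{z'}. s z z' * (f y z * f x z' * P f (remove1 z' (remove1 z r))))"
    by (rule sum_swap_ne[OF fin])
  also have "\<dots> = (\<Sum>z\<in>R. \<Sum>z'\<in>R-{z}. - (s z z' * (f x z * f y z' * P f (remove1 z' (remove1 z r)))))"
  proof (intro sum.cong refl)
    fix a b assume ab: "a \<in> R" "b \<in> R - {a}"
    then have "s b a = - s a b" using santi[of a b] by auto
    then show "s b a * (f y b * f x a * P f (remove1 a (remove1 b r))) =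
        - (s a b * (f x a * f y b * P f (remove1 b (remove1 a r))))"
      by (simp add: remove1_commute[of a b] mult_ac)
  qed
  finally have "P f (y # x # r) = - (f x y * P f r +
      (\<Sum>z\<in>R. \<Sum>z'\<in>R-{z}. s z z' * (f x z * f y z' * P f (remove1 z' (remove1 z r)))))"
    using anti[rule_format, of y x] by (simp add: sum_negf)
  then show ?thesis using expand[of x y] xy by simp
qed

lemma P_swap:
  fixes f :: "'a \<Rightarrow> 'a \<Rightarrow> 'r::comm_ring_1"
  assumes anti: "\<forall>u v. f u v = - f v u"
  shows "distinct (l @ x # y # r) \<Longrightarrow> P f (l @ x # y # r) = - P f (l @ y # x # r)"
proof (induction "length l" arbitrary: l r rule: less_induct)
  case less
  show ?case
  proof (cases l)
    case Nil then show ?thesis using P_swap0[OF anti] less.prems by simp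
  next
    case (Cons c l')
    define w1 where "w1 = l' @ x # y # r"
    define w2 where "w2 = l' @ y # x # r"
    have sw: "set w2 = set w1" by (auto simp: w1_def w2_def)
    have dl: "distinct (c # w1)" using less.prems Cons by (simp add: w1_def)
    have "P f (l @ y # x # r) = P f (c # w2)" using Cons by (simp add: w2_def)
    also have "\<dots> = (\<Sum>z\<in>set w1. (-1) ^ idx w2 z * f c z * P f (remove1 z w2))"
      unfolding P_Cons sw ..
    also have "\<dots> = (\<Sum>z\<in>set w1. - ((-1) ^ idx w1 z * f c z * P f (remove1 z w1)))"
    proof (rule sum.cong[OF refl])
      fix z assume z: "z \<in> set w1"
      have dw: "distinct w1" using dl by simp
      consider "z \<in> set l'" | "z = x" | "z = y" | "z \<in> set r" using z by (auto simp: w1_def)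
      then show "(-1) ^ idx w2 z * f c z * P f (remove1 z w2) = - ((-1) ^ idx w1 z * f c z * P f (remove1 z w1))"
      proof cases
        case 1
        have d': "distinct (remove1 z l' @ x # y # r)" using dw by (auto simp: w1_def)
        have "length (remove1 z l') < length l" using Cons 1 by (simp add: length_remove1)
        then have "P f (remove1 z l' @ x # y # r) = - P f (remove1 z l' @ y # x # r)"
          using less.hyps d' by blast
        then show ?thesis using 1 dw by (simp add: w1_def w2_def idx_append remove1_append)
      next
        case 2
        then show ?thesis using dw by (auto simp: w1_def w2_def idx_append remove1_append)
      next
        case 3
        then show ?thesis using dw by (auto simp: w1_def w2_def idx_append remove1_append)
      next
        case 4
        have d': "distinct (l' @ x # y # remove1 z r)" using dw by (auto simp: w1_def)
        have "P f (l' @ x # y # remove1 z r) = - P f (l' @ y # x # remove1 z r)"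
          using less.hyps d' Cons by simp
        then show ?thesis using 4 dw by (auto simp: w1_def w2_def idx_append remove1_append)
      qed
    qed
    also have "\<dots> = - P f (c # w1)"
      unfolding P_Cons by (simp add: sum_negf)
    also have "P f (c # w1) = P f (l @ x # y # r)" using Cons by (simp add: w1_def)
    finally show ?thesis by simp
  qed
qed

lemma P_front:
  fixes f :: "'a \<Rightarrow> 'a \<Rightarrow> 'r::comm_ring_1"
  assumes anti: "\<forall>u v. f u v = - f v u"
  shows "distinct (pre @ l @ z # r) \<Longrightarrow> P f (pre @ l @ z # r) = (-1) ^ length l * P f (pre @ z # l @ r)"
proof (induction l arbitrary: r rule: rev_induct)
  case (snoc v l')
  have "P f (pre @ (l' @ [v]) @ z # r) = P f ((pre @ l') @ v # z # r)" by simp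
  also have "\<dots> = - P f ((pre @ l') @ z # v # r)"
    using P_swap[OF anti] snoc.prems by (metis append.assoc append_Cons append_Nil)
  also have "P f ((pre @ l') @ z # v # r) = (-1) ^ length l' * P f (pre @ z # l' @ v # r)"
    using snoc.IH[of "v # r"] snoc.prems by auto
  finally show ?case by simp
qed simp


definition pfun :: "'a list \<Rightarrow> 'a list \<Rightarrow> nat \<Rightarrow> nat" where
  "pfun a c = (\<lambda>i. if i < length a then idx a (c ! i) else i)"

definition okp :: "'a list \<Rightarrow> 'a list \<Rightarrow> bool" where
  "okp a c \<longleftrightarrow> distinct a \<and> distinct c \<and> set c = set a"

lemma okp_len: "okp a c \<Longrightarrow> length c = length a"
  unfolding okp_def by (metis distinct_card)

lemma rs_eq:
  assumes "okp a c"
  shows "rearr_sign a c = sign (pfun a c)"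
proof -
  have len: "length c = length a" using okp_len[OF assms] .
  have da: "distinct a" and sc: "set c = set a" using assms by (auto simp: okp_def)
  have "(\<lambda>i. if i < length a then (THE j. j < length a \<and> a ! j = c ! i) else i) = pfun a c"
  proof
    fix i
    show "(if i < length a then (THE j. j < length a \<and> a ! j = c ! i) else i) = pfun a c i"
    proof (cases "i < length a")
      case True
      then have ci: "c ! i \<in> set a" using len sc by (metis nth_mem)
      have "(THE j. j < length a \<and> a ! j = c ! i) = idx a (c ! i)"
      proof (rule the_equality)
        show "idx a (c ! i) < length a \<and> a ! idx a (c ! i) = c ! i"
          using ci by (simp add: idx_less nth_idx)
      next
        fix j assume "j < length a \<and> a ! j = c ! i"
        then show "j = idx a (c ! i)" using idx_nth[OF da] by metis
      qed
      then show ?thesis using True by (simp add: pfun_def)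
    qed (simp add: pfun_def)
  qed
  then show ?thesis by (simp add: rearr_sign_def)
qed

lemma pfun_permutes:
  assumes "okp a c"
  shows "pfun a c permutes {..<length a}"
proof (rule bij_imp_permutes)
  have len: "length c = length a" using okp_len[OF assms] .
  have da: "distinct a" and dc: "distinct c" and sc: "set c = set a" using assms by (auto simp: okp_def)
  have inj: "inj_on (pfun a c) {..<length a}"
  proof (rule inj_onI)
    fix i j assume i: "i \<in> {..<length a}" and j: "j \<in> {..<length a}" and e: "pfun a c i = pfun a c j"
    have ci: "c ! i \<in> set a" "c ! j \<in> set a" using i j len sc by (metis lessThan_iff nth_mem)+
    then have "c ! i = c ! j" using e i j idx_inj[OF ci] by (simp add: pfun_def)
    then show "i = j" using dc i j len by (simp add: nth_eq_iff_index_eq)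
  qed
  have sub: "pfun a c ` {..<length a} \<subseteq> {..<length a}"
  proof
    fix y assume "y \<in> pfun a c ` {..<length a}"
    then obtain i where i: "i < length a" "y = pfun a c i" by auto
    then have "c ! i \<in> set a" using len sc by (metis nth_mem)
    then show "y \<in> {..<length a}" using i by (simp add: pfun_def idx_less)
  qed
  show "bij_betw (pfun a c) {..<length a} {..<length a}"
    unfolding bij_betw_def using inj endo_inj_surj[OF _ sub inj] by simp
  show "x \<notin> {..<length a} \<Longrightarrow> pfun a c x = x" for x by (simp add: pfun_def)
qed

lemma pfun_permutation: "okp a c \<Longrightarrow> permutation (pfun a c)"
  using pfun_permutes permutation_permutes by blast

lemma rs_refl: "distinct a \<Longrightarrow> rearr_sign a a = 1"
proof -
  assume da: "distinct a"
  then have ok: "okp a a" by (simp add: okp_def)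
  have "pfun a a = id" using da by (auto simp: pfun_def idx_nth)
  then show ?thesis using rs_eq[OF ok] by simp
qed

lemma rs_swap:
  assumes "okp a (l @ x # y # r)"
  shows "rearr_sign a (l @ x # y # r) = - rearr_sign a (l @ y # x # r)"
proof -
  define c1 where "c1 = l @ x # y # r"
  define c2 where "c2 = l @ y # x # r"
  define k where "k = length l"
  have ok1: "okp a c1" using assms by (simp add: c1_def)
  have ok2: "okp a c2" using assms by (auto simp: c2_def okp_def)
  have len: "length c1 = length a" using okp_len[OF ok1] .
  have kl: "Suc k < length a" using len by (simp add: c1_def k_def)
  have nth: "c2 ! i = c1 ! (Transposition.transpose k (Suc k) i)" if "i < length a" for i
  proof -
    consider "i < k" | "i = k" | "i = Suc k" | "Suc k < i" by linarith
    then show ?thesis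
    proof cases
      case 1 then show ?thesis by (simp add: c1_def c2_def k_def nth_append transpose_def)
    next
      case 2 then show ?thesis by (simp add: c1_def c2_def k_def nth_append transpose_def)
    next
      case 3 then show ?thesis by (simp add: c1_def c2_def k_def nth_append transpose_def)
    next
      case 4
      then obtain m where m: "i = Suc (Suc k) + m" by (metis add.commute less_iff_Suc_add add_Suc_right)
      then show ?thesis by (simp add: c1_def c2_def k_def nth_append transpose_def)
    qed
  qed
  have "pfun a c2 = pfun a c1 \<circ> Transposition.transpose k (Suc k)"
  proof
    fix i
    show "pfun a c2 i = (pfun a c1 \<circ> Transposition.transpose k (Suc k)) i"
    proof (cases "i < length a")
      case True
      have "Transposition.transpose k (Suc k) i < length a" using True kl by (simp add: transpose_def)
      then show ?thesis using True nth by (simp add: pfun_def)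
    next
      case False
      then have "Transposition.transpose k (Suc k) i = i" using kl by (auto simp: transpose_def)
      then show ?thesis using False by (simp add: pfun_def)
    qed
  qed
  then have "sign (pfun a c2) = sign (pfun a c1) * sign (Transposition.transpose k (Suc k))"
    by (simp add: sign_compose pfun_permutation[OF ok1] permutation_swap_id)
  then have "sign (pfun a c2) = - sign (pfun a c1)" by (simp add: sign_swap_id)
  then show ?thesis using rs_eq[OF ok1] rs_eq[OF ok2] by (simp add: c1_def c2_def)
qed

lemma rs_front:
  "okp a (pre @ l @ z # r) \<Longrightarrow>
    rearr_sign a (pre @ l @ z # r) = (-1) ^ length l * rearr_sign a (pre @ z # l @ r)"
proof (induction l arbitrary: r rule: rev_induct)
  case (snoc v l')
  have "rearr_sign a (pre @ (l' @ [v]) @ z # r) = rearr_sign a ((pre @ l') @ v # z # r)" by simp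
  also have "\<dots> = - rearr_sign a ((pre @ l') @ z # v # r)"
    using rs_swap snoc.prems by (metis append.assoc append_Cons append_Nil)
  also have "rearr_sign a ((pre @ l') @ z # v # r) = (-1) ^ length l' * rearr_sign a (pre @ z # l' @ v # r)"
    using snoc.IH[of "v # r"] snoc.prems by (auto simp: okp_def)
  finally show ?case by simp
qed simp

lemma rs_G:
  "okp a (pre @ c) \<Longrightarrow> distinct b \<Longrightarrow> set b = set c \<Longrightarrow>
   rearr_sign a (pre @ c) = rearr_sign b c * rearr_sign a (pre @ b)"
proof (induction b arbitrary: a pre c)
  case Nil
  then show ?case by (simp add: rs_refl)
next
  case (Cons h b')
  have "h \<in> set c" using Cons.prems by auto
  then obtain l r where c: "c = l @ h # r" by (meson split_list)
  have dc: "distinct c" using Cons.prems by (simp add: okp_def)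
  have sb': "set b' = set (l @ r)" using Cons.prems dc c by auto
  have e1: "rearr_sign a (pre @ l @ h # r) = (-1) ^ length l * rearr_sign a (pre @ h # l @ r)"
    using rs_front[of a pre l h r] Cons.prems(1) c by simp
  have okb: "okp (h # b') (l @ h # r)" using Cons.prems c by (auto simp: okp_def)
  have e2: "rearr_sign (h # b') (l @ h # r) = (-1) ^ length l * rearr_sign (h # b') (h # l @ r)"
    using rs_front[of "h # b'" "[]"] okb by simp
  have ok3: "okp a ((pre @ [h]) @ (l @ r))" using Cons.prems c by (auto simp: okp_def)
  have e3: "rearr_sign a ((pre @ [h]) @ (l @ r)) = rearr_sign b' (l @ r) * rearr_sign a ((pre @ [h]) @ b')"
    using Cons.IH[OF ok3] Cons.prems sb' by simp
  have ok4: "okp (h # b') ([h] @ (l @ r))" using Cons.prems c dc by (auto simp: okp_def)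
  have e4: "rearr_sign (h # b') ([h] @ (l @ r)) = rearr_sign b' (l @ r) * rearr_sign (h # b') ([h] @ b')"
    using Cons.IH[OF ok4] Cons.prems sb' by simp
  have "rearr_sign (h # b') ([h] @ b') = 1" using Cons.prems by (simp add: rs_refl)
  then show ?case using e1 e2 e3 e4 c by simp
qed

lemma rs_map:
  assumes "okp a c" "inj_on h (set a)"
  shows "rearr_sign (map h a) (map h c) = rearr_sign a c"
proof -
  have ok: "okp (map h a) (map h c)" using assms by (auto simp: okp_def distinct_map inj_on_subset)
  have len: "length c = length a" using okp_len[OF assms(1)] .
  have "pfun (map h a) (map h c) = pfun a c"
  proof
    fix i show "pfun (map h a) (map h c) i = pfun a c i"
    proof (cases "i < length a")
      case True
      then have "c ! i \<in> set a" using len assms(1) by (metis nth_mem okp_def)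
      then show ?thesis using True len assms(2) by (simp add: pfun_def idx_map)
    qed (simp add: pfun_def)
  qed
  then show ?thesis using rs_eq[OF ok] rs_eq[OF assms(1)] by simp
qed


lemma before_iff:
  assumes "distinct a"
  shows "before a p q \<longleftrightarrow> p \<in> set a \<and> q \<in> set a \<and> idx a p < idx a q"
proof
  assume "before a p q"
  then obtain i j where ij: "i < j" "j < length a" "a ! i = p" "a ! j = q" by (auto simp: before_def)
  then show "p \<in> set a \<and> q \<in> set a \<and> idx a p < idx a q"
    using idx_nth[OF assms] by (metis nth_mem order.strict_trans)
next
  assume h: "p \<in> set a \<and> q \<in> set a \<and> idx a p < idx a q"
  then show "before a p q" unfolding before_def
    by (metis idx_less nth_idx)
qed

lemma pairings_finite: "finite (pairings a)"
proof -
  have "pairings a \<subseteq> {ys. set ys \<subseteq> set a \<and> length ys = length a}"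
    by (auto simp: pairings_def)
  moreover have "finite {ys. set ys \<subseteq> set a \<and> length ys = length a}"
    by (rule finite_lists_length_eq) simp
  ultimately show ?thesis by (rule finite_subset)
qed

lemma pairings_Nil: "pairings [] = {[]}"
  by (auto simp: pairings_def)

lemma ssign_full: "distinct a \<Longrightarrow> ys \<in> pairings a \<Longrightarrow> ssign a ys = rearr_sign a ys"
  by (auto simp: ssign_def pairings_def wdel_def filter_empty_conv)

lemma pairings_first:
  assumes da: "distinct (u # w)" and ys: "ys \<in> pairings (u # w)"
  shows "ys ! 0 = u"
proof -
  define a where "a = u # w"
  define K where "K i = idx a (ys ! i)" for i
  have len: "length ys = length a" and sy: "set ys = set a" using ys by (auto simp: pairings_def a_def)
  have c1: "K (2*i) < K (2*i+1)" if "2*i+1 < length ys" for i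
    using ys that da by (auto simp: pairings_def a_def K_def before_iff)
  have c2: "K (2*i) < K (2*i+2)" if "2*i+2 < length ys" for i
    using ys that da by (auto simp: pairings_def a_def K_def before_iff)
  have ev: "K 0 \<le> K (2*i)" if "2*i < length ys" for i
    using that
  proof (induction i)
    case (Suc i)
    then have "K (2*i) < K (2*i+2)" using c2[of i] by simp
    then show ?case using Suc by simp
  qed simp
  have all: "K 0 \<le> K m" if "m < length ys" for m
  proof (cases "even m")
    case True then obtain i where "m = 2*i" by auto
    then show ?thesis using ev that by simp
  next
    case False then obtain i where m: "m = 2*i+1" using oddE by blast
    then show ?thesis using ev[of i] c1[of i] that by simp
  qed
  have "u \<in> set ys" using sy by (simp add: a_def)
  then obtain m where m: "m < length ys" "ys ! m = u" by (meson in_set_conv_nth)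
  then have "K m = 0" by (simp add: K_def a_def)
  then have "K 0 = 0" using all[OF m(1)] by simp
  moreover have "ys ! 0 \<in> set a" using m sy by (metis gr_zeroI less_nat_zero_code nth_mem)
  ultimately show ?thesis using nth_idx[of "ys ! 0" a] by (simp add: K_def a_def)
qed

lemma before_remove1:
  assumes da: "distinct (u # w)" and z: "z \<in> set w" and p: "p \<in> set (remove1 z w)" and q: "q \<in> set (remove1 z w)"
  shows "before (remove1 z w) p q \<longleftrightarrow> before (u # w) p q"
proof -
  have dw: "distinct w" using da by simp
  have dr: "distinct (remove1 z w)" using dw by simp
  have pw: "p \<in> set w" "p \<noteq> z" and qw: "q \<in> set w" "q \<noteq> z" using p q dw by auto
  have up: "u \<noteq> p" "u \<noteq> q" using da pw qw by auto
  have ip: "idx w p \<noteq> idx w z" "idx w q \<noteq> idx w z" using pw qw z idx_inj by metis+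
  show ?thesis
    using idx_remove1[OF dw z pw] idx_remove1[OF dw z qw] ip up p q pw qw
    by (auto simp: before_iff[OF dr] before_iff[OF da])
qed

lemma pairings_cons_dest:
  assumes da: "distinct (u # w)" and ys: "ys \<in> pairings (u # w)" and wn: "w \<noteq> []"
  shows "\<exists>z ys'. ys = u # z # ys' \<and> z \<in> set w \<and> ys' \<in> pairings (remove1 z w)"
proof -
  have len: "length ys = Suc (length w)" and sy: "set ys = set (u # w)" and dy: "distinct ys"
    using ys by (auto simp: pairings_def)
  have c1: "\<And>i. 2*i+1 < length ys \<Longrightarrow> before (u # w) (ys ! (2*i)) (ys ! (2*i+1))"
   and c2: "\<And>i. 2*i+2 < length ys \<Longrightarrow> before (u # w) (ys ! (2*i)) (ys ! (2*i+2))"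
    using ys by (auto simp: pairings_def)
  obtain v ys1 where "ys = v # ys1" using len by (cases ys) auto
  moreover obtain z ys' where "ys1 = z # ys'" using len wn \<open>ys = v # ys1\<close> by (cases ys1) auto
  ultimately have y: "ys = u # z # ys'" using pairings_first[OF da ys] by simp
  have dw: "distinct w" using da by simp
  have zw: "z \<in> set w" using y sy dy by auto
  have sr: "set (remove1 z w) = set w - {z}" using dw by simp
  have sy': "set ys' = set (remove1 z w)" using sy dy y sr da by auto
  have "ys' \<in> pairings (remove1 z w)"
    unfolding pairings_def
  proof (intro CollectI conjI allI impI)
    show "distinct ys'" using dy y by simp
    show "set ys' = set (remove1 z w)" using sy' .
    show "length ys' = length (remove1 z w)" using len y zw by (simp add: length_remove1)
  next
    fix i assume i: "2*i+1 < length ys'"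
    have "before (u # w) (ys ! (2*Suc i)) (ys ! (2*Suc i+1))" using c1[of "Suc i"] i y by simp
    then have b: "before (u # w) (ys' ! (2*i)) (ys' ! (2*i+1))" using y by simp
    have "ys' ! (2*i) \<in> set (remove1 z w)" "ys' ! (2*i+1) \<in> set (remove1 z w)"
      using sy'[symmetric] i by (auto intro!: nth_mem)
    then show "before (remove1 z w) (ys' ! (2*i)) (ys' ! (2*i+1))"
      using b before_remove1[OF da zw] by blast
  next
    fix i assume i: "2*i+2 < length ys'"
    have "before (u # w) (ys ! (2*Suc i)) (ys ! (2*Suc i+2))" using c2[of "Suc i"] i y by simp
    then have b: "before (u # w) (ys' ! (2*i)) (ys' ! (2*i+2))" using y by simp
    have "ys' ! (2*i) \<in> set (remove1 z w)" "ys' ! (2*i+2) \<in> set (remove1 z w)"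
      using sy'[symmetric] i by (auto intro!: nth_mem)
    then show "before (remove1 z w) (ys' ! (2*i)) (ys' ! (2*i+2))"
      using b before_remove1[OF da zw] by blast
  qed
  then show ?thesis using y zw by blast
qed

lemma pairings_cons_intro:
  assumes da: "distinct (u # w)" and zw: "z \<in> set w" and ys': "ys' \<in> pairings (remove1 z w)"
  shows "u # z # ys' \<in> pairings (u # w)"
proof -
  have dw: "distinct w" using da by simp
  have sr: "set (remove1 z w) = set w - {z}" using dw by simp
  have dy: "distinct ys'" and sy: "set ys' = set (remove1 z w)" and ly: "length ys' = length (remove1 z w)"
   and c1: "\<And>i. 2*i+1 < length ys' \<Longrightarrow> before (remove1 z w) (ys' ! (2*i)) (ys' ! (2*i+1))"
   and c2: "\<And>i. 2*i+2 < length ys' \<Longrightarrow> before (remove1 z w) (ys' ! (2*i)) (ys' ! (2*i+2))"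
    using ys' by (auto simp: pairings_def)
  have bu: "before (u # w) u v" if "v \<in> set w" for v
    using that da by (auto simp: before_iff)
  show ?thesis
    unfolding pairings_def
  proof (intro CollectI conjI allI impI)
    show "distinct (u # z # ys')" using dy sy sr da zw by auto
    show "set (u # z # ys') = set (u # w)" using sy sr zw by auto
    show "length (u # z # ys') = length (u # w)" using ly zw
      by (simp add: length_remove1) (metis Suc_pred length_pos_if_in_set)
  next
    fix i assume i: "2*i+1 < length (u # z # ys')"
    show "before (u # w) ((u # z # ys') ! (2*i)) ((u # z # ys') ! (2*i+1))"
    proof (cases i)
      case 0 then show ?thesis using bu zw by simp
    next
      case (Suc j)
      then have j: "2*j+1 < length ys'" using i by simp
      have "ys' ! (2*j) \<in> set (remove1 z w)" "ys' ! (2*j+1) \<in> set (remove1 z w)"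
        using sy[symmetric] j by (auto intro!: nth_mem)
      then show ?thesis using c1[OF j] before_remove1[OF da zw] Suc by simp
    qed
  next
    fix i assume i: "2*i+2 < length (u # z # ys')"
    show "before (u # w) ((u # z # ys') ! (2*i)) ((u # z # ys') ! (2*i+2))"
    proof (cases i)
      case 0
      then have "ys' \<noteq> []" using i by auto
      then have "ys' ! 0 \<in> set w" using sy sr by (metis Diff_iff length_greater_0_conv nth_mem)
      then show ?thesis using bu 0 by simp
    next
      case (Suc j)
      then have j: "2*j+2 < length ys'" using i by simp
      have "ys' ! (2*j) \<in> set (remove1 z w)" "ys' ! (2*j+2) \<in> set (remove1 z w)"
        using sy[symmetric] j by (auto intro!: nth_mem)
      then show ?thesis using c2[OF j] before_remove1[OF da zw] Suc by simp
    qed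
  qed
qed

lemma rs_cons2:
  assumes da: "distinct (u # w)" and zw: "z \<in> set w" and ys': "ys' \<in> pairings (remove1 z w)"
  shows "rearr_sign (u # w) (u # z # ys') = (-1) ^ idx w z * rearr_sign (remove1 z w) ys'"
proof -
  have dw: "distinct w" using da by simp
  obtain l r where w: "w = l @ z # r" using zw by (meson split_list)
  have zl: "z \<notin> set l" using dw w by simp
  have rem: "remove1 z w = l @ r" using w zl by (simp add: remove1_append)
  have iz: "idx w z = length l" using w zl by (simp add: idx_append)
  have sy: "set ys' = set (remove1 z w)" and dy: "distinct ys'" using ys' by (auto simp: pairings_def)
  have ok: "okp (u # w) ([u, z] @ ys')" using da sy dy dw zw by (auto simp: okp_def)
  have g: "rearr_sign (u # w) ([u, z] @ ys') = rearr_sign (remove1 z w) ys' * rearr_sign (u # w) ([u, z] @ remove1 z w)"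
    using rs_G[OF ok, of "remove1 z w"] sy dw by simp
  have ok2: "okp (u # w) ([u] @ l @ z # r)" using da w by (simp add: okp_def)
  have "rearr_sign (u # w) ([u] @ l @ z # r) = (-1) ^ length l * rearr_sign (u # w) ([u] @ z # l @ r)"
    using rs_front[OF ok2] .
  moreover have "rearr_sign (u # w) (u # w) = 1" using da by (rule rs_refl)
  then have "rearr_sign (u # w) ([u] @ l @ z # r) = 1" using w by simp
  ultimately have "rearr_sign (u # w) ([u, z] @ remove1 z w) = (-1) ^ length l"
    using rem by (metis append_Cons append_Nil mult.right_neutral mult_minus1 power_minus1_even
        left_minus_one_mult_self)
  then show ?thesis using g iz by simp
qed


lemma pf_cons:
  fixes f :: "'a \<Rightarrow> 'a \<Rightarrow> 'r::comm_ring_1"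
  assumes da: "distinct (u # w)" and ev: "even (length (u # w))"
  shows "pf f (u # w) = (\<Sum>z\<in>set w. (-1) ^ idx w z * f u z * pf f (remove1 z w))"
proof -
  have wn: "w \<noteq> []" using ev by auto
  have dw: "distinct w" using da by simp
  define Sig where "Sig = (SIGMA z:set w. pairings (remove1 z w))"
  define h where "h = (\<lambda>(z, ys'). u # z # (ys' :: 'a list))"
  define G where "G ys = of_int (ssign (u # w) ys) * (\<Prod>i<length (u # w) div 2. f (ys ! (2*i)) (ys ! (2*i+1)))" for ys
  have bij: "bij_betw h Sig (pairings (u # w))"
    unfolding bij_betw_def
  proof
    show "inj_on h Sig" by (auto simp: inj_on_def h_def)
    show "h ` Sig = pairings (u # w)"
    proof
      show "h ` Sig \<subseteq> pairings (u # w)"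
        using pairings_cons_intro[OF da] by (auto simp: Sig_def h_def)
    next
      show "pairings (u # w) \<subseteq> h ` Sig"
      proof
        fix ys assume "ys \<in> pairings (u # w)"
        then obtain z ys' where "ys = u # z # ys'" "z \<in> set w" "ys' \<in> pairings (remove1 z w)"
          using pairings_cons_dest[OF da _ wn] by blast
        then show "ys \<in> h ` Sig" by (auto simp: Sig_def h_def image_iff)
      qed
    qed
  qed
  have "pf f (u # w) = (\<Sum>ys\<in>pairings (u # w). G ys)"
    using da ev by (simp add: pf_def G_def)
  also have "\<dots> = (\<Sum>p\<in>Sig. G (h p))"
    by (rule sum.reindex_bij_betw[OF bij, symmetric])
  also have "\<dots> = (\<Sum>z\<in>set w. \<Sum>ys'\<in>pairings (remove1 z w). G (u # z # ys'))"
    unfolding Sig_def h_def by (subst sum.Sigma) (auto simp: pairings_finite prod.case_distrib)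
  also have "\<dots> = (\<Sum>z\<in>set w. (-1) ^ idx w z * f u z * pf f (remove1 z w))"
  proof (rule sum.cong[OF refl])
    fix z assume zw: "z \<in> set w"
    define n where "n = length (remove1 z w)"
    have nl: "length (u # w) = n + 2" using zw by (simp add: n_def length_remove1) (metis Suc_pred length_pos_if_in_set)
    have evn: "even n" using ev nl by simp
    have dr: "distinct (remove1 z w)" using dw by simp
    have div: "length (u # w) div 2 = Suc (n div 2)" using nl evn by simp
    have "G (u # z # ys') = (-1) ^ idx w z * f u z *
        (of_int (ssign (remove1 z w) ys') * (\<Prod>i<n div 2. f (ys' ! (2*i)) (ys' ! (2*i+1))))"
      if ys': "ys' \<in> pairings (remove1 z w)" for ys'
    proof -
      have s1: "ssign (u # w) (u # z # ys') = (-1) ^ idx w z * ssign (remove1 z w) ys'"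
        using ssign_full[OF da pairings_cons_intro[OF da zw ys']] ssign_full[OF dr ys']
          rs_cons2[OF da zw ys'] by simp
      have p1: "(\<Prod>i<length (u # w) div 2. f ((u # z # ys') ! (2*i)) ((u # z # ys') ! (2*i+1))) =
          f u z * (\<Prod>i<n div 2. f (ys' ! (2*i)) (ys' ! (2*i+1)))"
        unfolding div prod.lessThan_Suc_shift by simp
      show ?thesis unfolding G_def s1 p1 by (simp add: mult_ac)
    qed
    then have "(\<Sum>ys'\<in>pairings (remove1 z w). G (u # z # ys')) =
        (-1) ^ idx w z * f u z * (\<Sum>ys'\<in>pairings (remove1 z w).
           of_int (ssign (remove1 z w) ys') * (\<Prod>i<n div 2. f (ys' ! (2*i)) (ys' ! (2*i+1))))"
      by (simp add: sum_distrib_left)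
    also have "(\<Sum>ys'\<in>pairings (remove1 z w).
           of_int (ssign (remove1 z w) ys') * (\<Prod>i<n div 2. f (ys' ! (2*i)) (ys' ! (2*i+1)))) = pf f (remove1 z w)"
      using dr evn by (simp add: pf_def n_def)
    finally show "(\<Sum>ys'\<in>pairings (remove1 z w). G (u # z # ys')) = (-1) ^ idx w z * f u z * pf f (remove1 z w)" .
  qed
  finally show ?thesis .
qed

lemma pf_eq_P:
  fixes f :: "'a \<Rightarrow> 'a \<Rightarrow> 'r::comm_ring_1"
  shows "distinct l \<Longrightarrow> pf f l = P f l"
proof (induction "length l" arbitrary: l rule: less_induct)
  case less
  show ?case
  proof (cases l)
    case Nil
    have "ssign ([]::'a list) [] = 1" by (simp add: ssign_def wdel_def rs_refl)
    then show ?thesis using Nil by (simp add: pf_def pairings_Nil)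
  next
    case (Cons u w)
    show ?thesis
    proof (cases "even (length l)")
      case False
      then show ?thesis using P_odd by (simp add: pf_def)
    next
      case True
      have "pf f l = (\<Sum>z\<in>set w. (-1) ^ idx w z * f u z * pf f (remove1 z w))"
        using pf_cons less.prems True Cons by simp
      also have "\<dots> = (\<Sum>z\<in>set w. (-1) ^ idx w z * f u z * P f (remove1 z w))"
      proof (rule sum.cong[OF refl])
        fix z assume "z \<in> set w"
        then have "length (remove1 z w) < length l" using Cons by (simp add: length_remove1)
        moreover have "distinct (remove1 z w)" using less.prems Cons by simp
        ultimately show "(-1) ^ idx w z * f u z * pf f (remove1 z w) = (-1) ^ idx w z * f u z * P f (remove1 z w)"
          using less.hyps by simp
      qed
      also have "\<dots> = P f l" using Cons by (simp add: P_Cons)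
      finally show ?thesis .
    qed
  qed
qed



definition cnt :: "nat set \<Rightarrow> nat \<Rightarrow> nat" where
  "cnt S i = card {s\<in>S. s < i}"

definition sg :: "nat set \<Rightarrow> nat \<Rightarrow> int" where
  "sg S i = (-1) ^ cnt S i"

abbreviation sl :: "nat set \<Rightarrow> nat list" where
  "sl S \<equiv> sorted_list_of_set S"

definition Q :: "(nat \<Rightarrow> nat \<Rightarrow> 'r::comm_ring_1) \<Rightarrow> nat set \<Rightarrow> 'r" where
  "Q g S = P g (sl S)"

lemma sg_sq: "sg S i * sg S i = 1"
  by (simp add: sg_def power_mult_distrib[symmetric])

lemma sg_sq_r: "(of_int (sg S i) :: 'r::comm_ring_1) * of_int (sg S i) = 1"
  by (metis of_int_1 of_int_mult sg_sq)

lemma split_sorted: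
  assumes fin: "finite S" and z: "z \<notin> S"
  shows "\<exists>l r. sl S = l @ r \<and> sl (insert z S) = l @ z # r \<and> length l = cnt S z"
proof -
  define L where "L = sl (insert z S)"
  have sL: "set L = insert z S" unfolding L_def by (metis fin finite_insert set_sorted_list_of_set)
  have dL: "distinct L" by (simp add: L_def)
  have stL: "sorted_wrt (<) L" unfolding L_def by (rule strict_sorted_list_of_set)
  obtain l r where L: "L = l @ z # r" using sL by (metis insertI1 split_list)
  have zl: "z \<notin> set l" using dL L by simp
  have "sl S = sl (insert z S - {z})" using z by simp
  also have "\<dots> = remove1 z L" unfolding L_def using fin by (simp add: sorted_list_of_set_remove)
  also have "\<dots> = l @ r" using L zl by (simp add: remove1_append)
  finally have e1: "sl S = l @ r" .
  have lt: "\<forall>x\<in>set l. x < z" and gt: "\<forall>y\<in>set r. z < y"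
    using stL L by (auto simp: sorted_wrt_append)
  have "{s\<in>S. s < z} = set l"
  proof
    show "{s\<in>S. s < z} \<subseteq> set l"
    proof
      fix s assume s: "s \<in> {s\<in>S. s < z}"
      then have "s \<in> set L" using sL by auto
      then show "s \<in> set l" using s gt L by auto
    qed
    show "set l \<subseteq> {s\<in>S. s < z}" using lt sL L zl by auto
  qed
  then have "cnt S z = length l" using dL L by (simp add: cnt_def distinct_card)
  then show ?thesis using e1 L L_def by auto
qed

lemma cnt_remove_self: "cnt (S - {z}) z = cnt S z"
  unfolding cnt_def by (rule arg_cong[where f = card]) auto

lemma cnt_insert_self: "cnt (insert z S) z = cnt S z"
  unfolding cnt_def by (rule arg_cong[where f = card]) auto

lemma idx_sorted:
  assumes fin: "finite S" and z: "z \<in> S"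
  shows "idx (sl S) z = cnt S z"
proof -
  obtain l r where lr: "sl (S - {z}) = l @ r" "sl (insert z (S - {z})) = l @ z # r" "length l = cnt (S - {z}) z"
    using split_sorted[of "S - {z}" z] fin by auto
  have "insert z (S - {z}) = S" using z by auto
  then have s: "sl S = l @ z # r" using lr by simp
  have "z \<notin> set l" using s distinct_sorted_list_of_set[of S] by auto
  then show ?thesis using s lr cnt_remove_self by (simp add: idx_append)
qed

lemma P_insert:
  fixes g :: "nat \<Rightarrow> nat \<Rightarrow> 'r::comm_ring_1"
  assumes anti: "\<forall>u v. g u v = - g v u"
    and fin: "finite S" and z: "z \<notin> S" and d: "distinct (pre @ z # sl S)"
  shows "P g (pre @ z # sl S) = of_int (sg S z) * P g (pre @ sl (insert z S))"
proof -
  obtain l r where lr: "sl S = l @ r" "sl (insert z S) = l @ z # r" "length l = cnt S z"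
    using split_sorted[OF fin z] by auto
  have d2: "distinct (pre @ l @ z # r)" using d lr by auto
  have "P g (pre @ l @ z # r) = (-1) ^ length l * P g (pre @ z # l @ r)"
    using P_front[OF anti d2] .
  then have "(-1) ^ length l * P g (pre @ l @ z # r) = P g (pre @ z # l @ r)"
    by (simp add: power_mult_distrib[symmetric] mult.assoc[symmetric] flip: power_add)
  then show ?thesis using lr by (simp add: sg_def)
qed

lemma rs_insert:
  assumes fin: "finite S" and z: "z \<notin> S" and ok: "okp a (pre @ z # sl S)"
  shows "rearr_sign a (pre @ z # sl S) = sg S z * rearr_sign a (pre @ sl (insert z S))"
proof -
  obtain l r where lr: "sl S = l @ r" "sl (insert z S) = l @ z # r" "length l = cnt S z"
    using split_sorted[OF fin z] by auto
  have ok2: "okp a (pre @ l @ z # r)" using ok lr by (auto simp: okp_def)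
  have "rearr_sign a (pre @ l @ z # r) = (-1) ^ length l * rearr_sign a (pre @ z # l @ r)"
    using rs_front[OF ok2] .
  then have "(-1) ^ length l * rearr_sign a (pre @ l @ z # r) = rearr_sign a (pre @ z # l @ r)"
    by (simp flip: power_add mult.assoc)
  then show ?thesis using lr by (simp add: sg_def)
qed

lemma Q_expand:
  fixes g :: "nat \<Rightarrow> nat \<Rightarrow> 'r::comm_ring_1"
  assumes anti: "\<forall>u v. g u v = - g v u"
    and fin: "finite V" and u: "u \<in> V"
  shows "Q g V = (\<Sum>z\<in>V-{u}. of_int (sg V u * sg (V - {u}) z) * g u z * Q g (V - {u} - {z}))"
proof -
  define W where "W = V - {u}"
  have finW: "finite W" using fin by (simp add: W_def)
  have uW: "u \<notin> W" by (simp add: W_def)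
  have VW: "insert u W = V" using u by (auto simp: W_def)
  have d: "distinct ([] @ u # sl W)" using uW finW by simp
  have "P g (u # sl W) = of_int (sg W u) * Q g V"
    using P_insert[OF anti finW uW d] VW by (simp add: Q_def)
  moreover have "sg W u = sg V u" by (simp add: W_def sg_def cnt_remove_self)
  ultimately have e: "Q g V = of_int (sg V u) * P g (u # sl W)"
    by (simp add: mult.assoc[symmetric] sg_sq_r)
  have "P g (u # sl W) = (\<Sum>z\<in>W. (-1) ^ idx (sl W) z * g u z * P g (remove1 z (sl W)))"
    using finW by (simp add: P_Cons)
  also have "\<dots> = (\<Sum>z\<in>W. of_int (sg W z) * g u z * Q g (W - {z}))"
  proof (rule sum.cong[OF refl])
    fix z assume z: "z \<in> W"
    show "(-1) ^ idx (sl W) z * g u z * P g (remove1 z (sl W)) = of_int (sg W z) * g u z * Q g (W - {z})"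
      using idx_sorted[OF finW z] finW by (simp add: sg_def Q_def sorted_list_of_set_remove)
  qed
  finally show ?thesis using e by (simp add: W_def sum_distrib_left mult.assoc)
qed


definition ep :: "nat \<Rightarrow> nat \<Rightarrow> int" where
  "ep a i = (if a < i then -1 else 1)"

definition tog :: "nat set \<Rightarrow> nat \<Rightarrow> nat set" where
  "tog S i = (if i \<in> S then S - {i} else insert i S)"

definition DD :: "nat set \<Rightarrow> nat set \<Rightarrow> nat set" where
  "DD S T = (S - T) \<union> (T - S)"

definition Phi :: "(nat \<Rightarrow> nat \<Rightarrow> 'r::comm_ring_1) \<Rightarrow> nat set \<Rightarrow> nat set \<Rightarrow> 'r" where
  "Phi g S T = (\<Sum>i\<in>DD S T. of_int (sg S i * sg T i) * Q g (tog S i) * Q g (tog T i))"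

lemma ep_swap: "a \<noteq> i \<Longrightarrow> ep i a = - ep a i"
  by (auto simp: ep_def)

lemma ep_sq: "ep a i * ep a i = 1"
  by (auto simp: ep_def)

lemma cnt_remove:
  assumes fin: "finite S" and p: "p \<in> S"
  shows "cnt S i = cnt (S - {p}) i + (if p < i then 1 else 0)"
proof (cases "p < i")
  case True
  have "{s\<in>S. s < i} = insert p {s\<in>S - {p}. s < i}" using True p by auto
  then show ?thesis using True fin by (simp add: cnt_def)
next
  case False
  have "{s\<in>S. s < i} = {s\<in>S - {p}. s < i}" using False by auto
  then show ?thesis using False by (simp add: cnt_def)
qed

lemma sg_remove: "finite S \<Longrightarrow> p \<in> S \<Longrightarrow> sg (S - {p}) i = sg S i * ep p i"
  using cnt_remove[of S p i] by (auto simp: sg_def ep_def)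

lemma sg_insert: "finite S \<Longrightarrow> p \<notin> S \<Longrightarrow> sg (insert p S) i = sg S i * ep p i"
  using sg_remove[of "insert p S" p i] by (simp add: mult.assoc ep_sq)

lemma sg_tog: "finite S \<Longrightarrow> sg (tog S p) i = sg S i * ep p i"
  by (simp add: tog_def sg_remove sg_insert)

lemma finite_tog: "finite S \<Longrightarrow> finite (tog S p)"
  by (simp add: tog_def)

lemma Phi_sym: "Phi g S T = Phi g T S"
  unfolding Phi_def DD_def by (simp add: Un_commute mult_ac)

lemma Phi_step:
  fixes g :: "nat \<Rightarrow> nat \<Rightarrow> 'r::comm_ring_1"
  assumes anti: "\<forall>u v. g u v = - g v u"
    and finS: "finite S" and finT: "finite T" and uS: "u \<in> S" and uT: "u \<notin> T"
    and IH: "\<And>z. z \<in> S - {u} \<Longrightarrow> Phi g (S - {u} - {z}) T = 0"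
  shows "Phi g S T = 0"
proof -
  define D where "D = DD S T"
  define W where "W = (S \<union> T) - {u}"
  have finD: "finite D" using finS finT by (simp add: D_def DD_def)
  have finW: "finite W" using finS finT by (simp add: W_def)
  have uD: "u \<in> D" using uS uT by (simp add: D_def DD_def)
  define a where "a i z = (if i = u then (if z \<in> T then of_int (sg S u * sg T z) * Q g (S - {u}) * Q g (T - {z}) else 0)
     else (if z \<in> tog S i then of_int (sg S i * sg T i * (sg (tog S i) u * sg (tog S i - {u}) z))
             * Q g (tog S i - {u} - {z}) * Q g (tog T i) else 0))" for i z
  have tm: "of_int (sg S i * sg T i) * Q g (tog S i) * Q g (tog T i) = (\<Sum>z\<in>W. g u z * a i z)"
    if iD: "i \<in> D" for i
  proof (cases "i = u")
    case True
    have V: "insert u T - {u} = T" using uT by auto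
    have fV: "finite (insert u T)" using finT by simp
    have "Q g (insert u T) = (\<Sum>z\<in>T. of_int (sg (insert u T) u * sg T z) * g u z * Q g (T - {z}))"
      using Q_expand[OF anti fV, of u] V by simp
    also have "\<dots> = (\<Sum>z\<in>T. of_int (sg T u * sg T z) * g u z * Q g (T - {z}))"
      by (simp add: sg_def cnt_insert_self)
    finally have eQ: "Q g (insert u T) = (\<Sum>z\<in>T. of_int (sg T u * sg T z) * g u z * Q g (T - {z}))" .
    have "of_int (sg S i * sg T i) * Q g (tog S i) * Q g (tog T i)
        = of_int (sg S u * sg T u) * Q g (S - {u}) * Q g (insert u T)"
      using True uS uT by (simp add: tog_def)
    also have "\<dots> = (\<Sum>z\<in>T. g u z * (of_int (sg S u * sg T z) * Q g (S - {u}) * Q g (T - {z})))"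
    proof -
      have "\<And>z. of_int (sg S u * sg T u) * Q g (S - {u}) * (of_int (sg T u * sg T z) * g u z * Q g (T - {z}))
          = g u z * (of_int (sg S u * sg T z) * Q g (S - {u}) * Q g (T - {z}))"
      proof -
        fix z
        have "of_int (sg S u * sg T u) * (of_int (sg T u * sg T z) :: 'r) = of_int (sg S u * sg T z)"
          using sg_sq[of T u] by (metis (no_types, lifting) mult.assoc mult.left_commute mult.right_neutral of_int_mult)
        then show "of_int (sg S u * sg T u) * Q g (S - {u}) * (of_int (sg T u * sg T z) * g u z * Q g (T - {z}))
          = g u z * (of_int (sg S u * sg T z) * Q g (S - {u}) * Q g (T - {z}))"
          by (metis (no_types, lifting) mult.assoc mult.commute mult.left_commute)
      qed
      then show ?thesis unfolding eQ sum_distrib_left by simp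
    qed
    also have "\<dots> = (\<Sum>z\<in>W. g u z * a i z)"
    proof -
      have "(\<Sum>z\<in>W. g u z * a i z) = (\<Sum>z\<in>W. if z \<in> T then g u z * (of_int (sg S u * sg T z) * Q g (S - {u}) * Q g (T - {z})) else 0)"
        by (rule sum.cong[OF refl]) (simp add: a_def True)
      also have "\<dots> = (\<Sum>z\<in>W \<inter> T. g u z * (of_int (sg S u * sg T z) * Q g (S - {u}) * Q g (T - {z})))"
        by (rule sum.inter_restrict[OF finW, symmetric])
      also have "W \<inter> T = T" using uT by (auto simp: W_def)
      finally show ?thesis by simp
    qed
    finally show ?thesis .
  next
    case False
    define V where "V = tog S i"
    have fV: "finite V" using finS by (simp add: V_def finite_tog)
    have uV: "u \<in> V" using uS False by (auto simp: V_def tog_def)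
    have VW: "V - {u} \<subseteq> W" using iD by (auto simp: V_def tog_def W_def D_def DD_def)
    have "of_int (sg S i * sg T i) * Q g (tog S i) * Q g (tog T i)
        = of_int (sg S i * sg T i) * Q g (tog T i) * (\<Sum>z\<in>V-{u}. of_int (sg V u * sg (V - {u}) z) * g u z * Q g (V - {u} - {z}))"
      using Q_expand[OF anti fV uV] by (simp add: V_def mult_ac)
    also have "\<dots> = (\<Sum>z\<in>V-{u}. g u z * (of_int (sg S i * sg T i * (sg V u * sg (V - {u}) z)) * Q g (V - {u} - {z}) * Q g (tog T i)))"
      by (simp add: sum_distrib_left mult_ac)
    also have "\<dots> = (\<Sum>z\<in>W \<inter> V. g u z * (of_int (sg S i * sg T i * (sg V u * sg (V - {u}) z)) * Q g (V - {u} - {z}) * Q g (tog T i)))"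
    proof -
      have "W \<inter> V = V - {u}" using VW by (auto simp: W_def)
      then show ?thesis by simp
    qed
    also have "\<dots> = (\<Sum>z\<in>W. if z \<in> V then g u z * (of_int (sg S i * sg T i * (sg V u * sg (V - {u}) z)) * Q g (V - {u} - {z}) * Q g (tog T i)) else 0)"
      by (rule sum.inter_restrict[OF finW])
    also have "\<dots> = (\<Sum>z\<in>W. g u z * a i z)"
      by (rule sum.cong[OF refl]) (simp add: a_def False V_def)
    finally show ?thesis .
  qed
  have "Phi g S T = (\<Sum>i\<in>D. \<Sum>z\<in>W. g u z * a i z)"
    unfolding Phi_def D_def[symmetric] by (rule sum.cong[OF refl]) (rule tm)
  also have "\<dots> = (\<Sum>z\<in>W. g u z * (\<Sum>i\<in>D. a i z))"
    by (subst sum.swap) (simp add: sum_distrib_left)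
  also have "\<dots> = 0"
  proof (rule sum.neutral, rule ballI)
    fix z assume zW: "z \<in> W"
    then have zu: "z \<noteq> u" by (simp add: W_def)
    define S' where "S' = S - {u} - {z}"
    define K where "K = sg S u * sg (S - {u}) z"
    have finS': "finite S'" using finS by (simp add: S'_def)
    have gen: "a i z = of_int K * (of_int (sg S' i * sg T i) * Q g (tog S' i) * Q g (tog T i))"
      if zS: "z \<in> S" and iD: "i \<in> D" and iu: "i \<noteq> u" and iz: "i \<noteq> z" for i
    proof -
      have zt: "z \<in> tog S i" using zS iz by (auto simp: tog_def)
      have tt: "tog S i - {u} - {z} = tog S' i" using iu iz by (auto simp: tog_def S'_def)
      have tu: "tog S i - {u} = tog (S - {u}) i" using iu by (auto simp: tog_def)
      have s1: "sg (tog S i) u = sg S u * ep i u" by (rule sg_tog[OF finS])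
      have s2: "sg (tog S i - {u}) z = sg (S - {u}) z * ep i z" unfolding tu using finS by (simp add: sg_tog)
      have s3: "sg S' i = sg S i * ep u i * ep z i"
        using finS uS zS zu by (simp add: S'_def sg_remove)
      have E: "sg S i * sg T i * (sg (tog S i) u * sg (tog S i - {u}) z) = K * (sg S' i * sg T i)"
        unfolding s1 s2 s3 K_def using ep_swap[of u i] ep_swap[of z i] iu iz by (simp add: mult_ac)
      have "a i z = of_int (sg S i * sg T i * (sg (tog S i) u * sg (tog S i - {u}) z)) * Q g (tog S' i) * Q g (tog T i)"
        unfolding a_def using iu zt tt by simp
      also have "\<dots> = of_int (K * (sg S' i * sg T i)) * Q g (tog S' i) * Q g (tog T i)"
        by (simp only: E)
      also have "\<dots> = of_int K * (of_int (sg S' i * sg T i) * Q g (tog S' i) * Q g (tog T i))"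
        by (simp add: mult_ac)
      finally show ?thesis .
    qed
    consider "z \<in> S" "z \<notin> T" | "z \<in> S" "z \<in> T" | "z \<notin> S" "z \<in> T" using zW by (auto simp: W_def)
    then show "g u z * (\<Sum>i\<in>D. a i z) = 0"
    proof cases
      case 1
      have DS': "DD S' T = D - {u, z}" using 1 uS uT by (auto simp: DD_def D_def S'_def)
      have "(\<Sum>i\<in>D. a i z) = (\<Sum>i\<in>D - {u, z}. a i z)"
      proof (rule sum.mono_neutral_right[OF finD])
        show "D - {u, z} \<subseteq> D" by auto
        show "\<forall>i\<in>D - (D - {u, z}). a i z = 0" using 1 by (auto simp: a_def tog_def)
      qed
      also have "\<dots> = (\<Sum>i\<in>D - {u, z}. of_int K * (of_int (sg S' i * sg T i) * Q g (tog S' i) * Q g (tog T i)))"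
        by (rule sum.cong[OF refl]) (use gen 1 in auto)
      also have "\<dots> = of_int K * Phi g S' T"
        unfolding Phi_def DS' by (simp add: sum_distrib_left)
      also have "Phi g S' T = 0" using IH[of z] 1 zu by (simp add: S'_def)
      finally show ?thesis by simp
    next
      case 2
      have zD: "z \<notin> D" using 2 by (simp add: D_def DD_def)
      have DS': "DD S' T = insert z (D - {u})" using 2 uS uT by (auto simp: DD_def D_def S'_def)
      have tS'z: "tog S' z = S - {u}" using 2 zu by (auto simp: tog_def S'_def)
      have tTz: "tog T z = T - {z}" using 2 by (simp add: tog_def)
      have sS'z: "sg S' z = sg (S - {u}) z" by (simp add: S'_def sg_def cnt_remove_self)
      have auz: "a u z = of_int K * (of_int (sg S' z * sg T z) * Q g (tog S' z) * Q g (tog T z))"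
      proof -
        have "K * (sg S' z * sg T z) = sg S u * sg T z"
          unfolding K_def sS'z using sg_sq[of "S - {u}" z] by (metis mult.assoc mult.commute mult.left_commute mult.right_neutral)
        then show ?thesis unfolding a_def tS'z tTz using 2
          by (metis (no_types, lifting) mult.assoc of_int_mult)
      qed
      have "(\<Sum>i\<in>D. a i z) = a u z + (\<Sum>i\<in>D - {u}. a i z)"
        by (rule sum.remove[OF finD uD])
      also have "(\<Sum>i\<in>D - {u}. a i z) = (\<Sum>i\<in>D - {u}. of_int K * (of_int (sg S' i * sg T i) * Q g (tog S' i) * Q g (tog T i)))"
        by (rule sum.cong[OF refl]) (use gen 2 zD in auto)
      also have "a u z + \<dots> = of_int K * Phi g S' T"
        unfolding Phi_def DS' using finD zD auz by (simp add: sum_distrib_left distrib_left)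
      also have "Phi g S' T = 0" using IH[of z] 2 zu by (simp add: S'_def)
      finally show ?thesis by simp
    next
      case 3
      have zD: "z \<in> D" using 3 by (simp add: D_def DD_def)
      have "(\<Sum>i\<in>D. a i z) = (\<Sum>i\<in>{u, z}. a i z)"
      proof (rule sum.mono_neutral_right[OF finD])
        show "{u, z} \<subseteq> D" using uD zD by auto
        show "\<forall>i\<in>D - {u, z}. a i z = 0" using 3 by (auto simp: a_def tog_def)
      qed
      also have "\<dots> = a u z + a z z" using zu by simp
      also have "\<dots> = 0"
      proof -
        have t1: "tog S z = insert z S" using 3 by (simp add: tog_def)
        have t2: "insert z S - {u} - {z} = S - {u}" using 3 by auto
        have t3: "tog T z = T - {z}" using 3 by (simp add: tog_def)
        have s1: "sg (insert z S) u = sg S u * ep z u" using finS 3 by (simp add: sg_insert)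
        have "insert z S - {u} = insert z (S - {u})" using zu by auto
        then have "sg (insert z S - {u}) z = sg (S - {u}) z" by (simp add: sg_def cnt_insert_self)
        then have s2: "sg (insert z S - {u}) z = sg S z * ep u z"
          using sg_remove[OF finS uS] by simp
        have "sg S z * sg T z * (sg (insert z S) u * sg (insert z S - {u}) z) = - (sg S u * sg T z)"
          unfolding s1 s2 using ep_swap[of u z] zu ep_sq[of u z] sg_sq[of S z]
          by (simp add: mult_ac)
        then show ?thesis unfolding a_def t1 t2 t3 using 3 zu
          by (simp add: mult_ac)
      qed
      finally show ?thesis by simp
    qed
  qed
  finally show ?thesis .
qed


theorem Phi_zero:
  fixes g :: "nat \<Rightarrow> nat \<Rightarrow> 'r::comm_ring_1"
  assumes anti: "\<forall>u v. g u v = - g v u"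
  shows "finite S \<Longrightarrow> finite T \<Longrightarrow> Phi g S T = 0"
proof (induction "card S + card T" arbitrary: S T rule: less_induct)
  case less
  show ?case
  proof (cases "S - T = {}")
    case False
    then obtain u where u: "u \<in> S" "u \<notin> T" by auto
    show ?thesis
    proof (rule Phi_step[OF anti less.prems u])
      fix z assume z: "z \<in> S - {u}"
      have "card (S - {u} - {z}) < card S"
        using less.prems(1) u(1) by (meson card_Diff1_less card_mono finite_Diff Diff_subset le_less_trans)
      then show "Phi g (S - {u} - {z}) T = 0"
        using less.hyps[of "S - {u} - {z}" T] less.prems by simp
    qed
  next
    case empty: True
    show ?thesis
    proof (cases "T - S = {}")
      case False
      then obtain u where u: "u \<in> T" "u \<notin> S" by auto
      have "Phi g T S = 0"
      proof (rule Phi_step[OF anti less.prems(2,1) u])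
        fix z assume z: "z \<in> T - {u}"
        have "card (T - {u} - {z}) < card T"
          using less.prems(2) u(1) by (meson card_Diff1_less card_mono finite_Diff Diff_subset le_less_trans)
        then have "Phi g S (T - {u} - {z}) = 0"
          using less.hyps[of S "T - {u} - {z}"] less.prems by simp
        then show "Phi g (T - {u} - {z}) S = 0" by (simp add: Phi_sym)
      qed
      then show ?thesis by (simp add: Phi_sym)
    next
      case True
      then have "DD S T = {}" using empty by (simp add: DD_def)
      then show ?thesis by (simp add: Phi_def)
    qed
  qed
qed


lemma cnt_ival: "cnt {lo..<hi} i = min i hi - lo"
proof -
  have "{s\<in>{lo..<hi}. s < i} = {lo..<min i hi}" by auto
  then show ?thesis by (simp add: cnt_def)
qed

lemma sg_ival: "sg {lo..<hi} i = (-1) ^ (min i hi - lo)"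
  by (simp add: sg_def cnt_ival)

lemma sg_Un: "finite X \<Longrightarrow> finite Y \<Longrightarrow> X \<inter> Y = {} \<Longrightarrow> sg (X \<union> Y) i = sg X i * sg Y i"
proof -
  assume f: "finite X" "finite Y" and d: "X \<inter> Y = {}"
  have "{s\<in>X \<union> Y. s < i} = {s\<in>X. s < i} \<union> {s\<in>Y. s < i}" by auto
  moreover have "card ({s\<in>X. s < i} \<union> {s\<in>Y. s < i}) = card {s\<in>X. s < i} + card {s\<in>Y. s < i}"
    by (rule card_Un_disjoint) (use f d in auto)
  ultimately show ?thesis by (simp add: sg_def cnt_def power_add)
qed

lemma m1_eq: "even (m + n) \<Longrightarrow> ((-1::int) ^ m) = (-1) ^ n"
  by (metis minus_one_power_iff even_add)

lemma sign_B:
  fixes a b c ix j :: nat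
  assumes ix: "a \<le> ix" "ix < a + b" and j: "a \<le> j" "j < a + b" "j \<noteq> ix"
  defines "A \<equiv> {0..<a}" and "B \<equiv> {a..<a+b}" and "C \<equiv> {a+b..<a+b+c}"
  defines "S \<equiv> {0..<a+b} - {ix}" and "T \<equiv> insert ix (A \<union> C)"
  shows "sg (B - {ix} - {j}) j * sg (B - {ix}) ix * (sg (A \<union> C) j * sg (insert j (A \<union> C)) ix)
       = - (sg S ix * sg T ix * (sg S j * sg T j))"
proof -
  have ixB: "ix \<in> B" using ix by (simp add: B_def)
  have fA: "finite A" "finite C" "finite B" by (simp_all add: A_def B_def C_def)
  have dAC: "A \<inter> C = {}" by (auto simp: A_def C_def)
  have jAC: "j \<notin> A \<union> C" "ix \<notin> A \<union> C" using ix j by (auto simp: A_def C_def)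
  have e1: "sg (B - {ix} - {j}) j = (-1) ^ (j - a) * ep ix j"
    using sg_remove[of B ix j] fA ixB by (simp add: sg_def cnt_remove_self sg_ival[unfolded sg_def] B_def j)
  have e2: "sg (B - {ix}) ix = (-1) ^ (ix - a)"
    by (simp add: sg_def cnt_remove_self sg_ival[unfolded sg_def] B_def ix)
  have sAC: "sg (A \<union> C) k = (-1) ^ (min k a) * (-1) ^ (min k (a+b+c) - (a+b))" for k
    using sg_Un[OF fA(1,2) dAC] by (simp add: A_def C_def sg_ival)
  have e3: "sg (A \<union> C) j = (-1) ^ a" using j by (simp add: sAC)
  have e4: "sg (insert j (A \<union> C)) ix = (-1) ^ a * ep j ix"
    using sg_insert[of "A \<union> C" j ix] fA jAC ix by (simp add: sAC)
  have sS: "sg S k = (-1) ^ (min k (a+b)) * ep ix k" for k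
    using sg_remove[of "{0..<a+b}" ix k] ix by (simp add: S_def sg_ival)
  have sT: "sg T k = sg (A \<union> C) k * ep ix k" for k
    using sg_insert[of "A \<union> C" ix k] fA jAC by (simp add: T_def)
  have sSix: "sg S ix = (-1) ^ ix" by (simp add: S_def sg_def cnt_remove_self cnt_ival ix)
  have sTix: "sg T ix = (-1) ^ a" using ix by (simp add: T_def sg_def cnt_insert_self sAC[unfolded sg_def])
  obtain p q where pq: "ix = a + p" "j = a + q" using ix j le_Suc_ex by blast
  have "ep j ix = - ep ix j" using ep_swap[of ix j] j by simp
  moreover have e5: "sg (A \<union> C) ix = (-1) ^ a" using ix by (simp add: sAC)
  moreover have "p < b" using pq ix by simp
  ultimately show ?thesis
    unfolding e1 e2 e3 e4 sS sT sSix sTix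
    using j pq by (simp add: e3 e5 power_add ep_def minus_one_power_iff)
qed


lemma sign_C:
  fixes a b c ix j :: nat
  assumes ix: "a \<le> ix" "ix < a + b" and j: "a + b \<le> j" "j < a + b + c"
  defines "A \<equiv> {0..<a}" and "B \<equiv> {a..<a+b}" and "C \<equiv> {a+b..<a+b+c}"
  defines "S \<equiv> {0..<a+b} - {ix}" and "T \<equiv> insert ix (A \<union> C)"
  shows "sg (B - {ix}) ix * sg (C - {j}) j * (sg (B - {ix}) j * sg (C - {j}) ix)
       = - (sg S ix * sg T ix * (sg S j * sg T j))"
proof -
  have ixB: "ix \<in> B" using ix by (simp add: B_def)
  have jC: "j \<in> C" using j by (simp add: C_def)
  have fA: "finite A" "finite C" "finite B" by (simp_all add: A_def B_def C_def)
  have dAC: "A \<inter> C = {}" by (auto simp: A_def C_def)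
  have jAC: "ix \<notin> A \<union> C" using ix by (auto simp: A_def C_def)
  have e1: "sg (B - {ix}) ix = (-1) ^ (ix - a)"
    by (simp add: sg_def cnt_remove_self sg_ival[unfolded sg_def] B_def ix)
  have e2: "sg (C - {j}) j = (-1) ^ (j - (a + b))"
    by (simp add: sg_def cnt_remove_self sg_ival[unfolded sg_def] C_def j)
  have e3: "sg (B - {ix}) j = (-1) ^ b * ep ix j"
    using sg_remove[of B ix j] fA ixB j by (simp add: B_def sg_ival)
  have e4: "sg (C - {j}) ix = ep j ix"
    using sg_remove[of C j ix] fA jC ix by (simp add: C_def sg_ival)
  have sAC: "sg (A \<union> C) k = (-1) ^ (min k a) * (-1) ^ (min k (a+b+c) - (a+b))" for k
    using sg_Un[OF fA(1,2) dAC] by (simp add: A_def C_def sg_ival)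
  have sS: "sg S k = (-1) ^ (min k (a+b)) * ep ix k" for k
    using sg_remove[of "{0..<a+b}" ix k] ix by (simp add: S_def sg_ival)
  have sT: "sg T k = sg (A \<union> C) k * ep ix k" for k
    using sg_insert[of "A \<union> C" ix k] fA jAC by (simp add: T_def)
  have sSix: "sg S ix = (-1) ^ ix" by (simp add: S_def sg_def cnt_remove_self cnt_ival ix)
  have sTix: "sg T ix = (-1) ^ a" using ix by (simp add: T_def sg_def cnt_insert_self sAC[unfolded sg_def])
  obtain p q where pq: "ix = a + p" "j = a + b + q" using ix j le_Suc_ex by blast
  have "p < b" "q < c" using pq ix j by auto
  then show ?thesis
    unfolding e1 e2 e3 e4 sS sT sSix sTix
    using pq by (simp add: sAC power_add ep_def minus_one_power_iff)
qed

lemma nat_identity: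
  fixes g :: "nat \<Rightarrow> nat \<Rightarrow> 'r::comm_ring_1" and a b c ix :: nat
  assumes anti: "\<forall>u v. g u v = - g v u" and ix: "a \<le> ix" "ix < a + b"
  defines "A \<equiv> {0..<a}" and "B \<equiv> {a..<a+b}" and "C \<equiv> {a+b..<a+b+c}"
  shows "Q g {0..<a+b} * Q g (A \<union> C) =
    (\<Sum>j\<in>B. of_int (if j = ix then 0 else sg (B - {ix} - {j}) j * sg (B - {ix}) ix)
        * Q g ({0..<a+b} - {ix} - {j})
        * (of_int (sg (A \<union> C) j * sg (insert j (A \<union> C)) ix) * Q g (insert ix (insert j (A \<union> C)))))
  + (\<Sum>j\<in>C. of_int (sg (B - {ix}) ix) * of_int (sg (C - {j}) j)
        * (of_int (sg (B - {ix}) j) * Q g (A \<union> insert j (B - {ix})))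
        * (of_int (sg (C - {j}) ix) * Q g (A \<union> insert ix (C - {j}))))"
proof -
  define S where "S = {0..<a+b} - {ix}"
  define T where "T = insert ix (A \<union> C)"
  define t where "t i = of_int (sg S i * sg T i) * Q g (tog S i) * Q g (tog T i)" for i
  define lam where "lam = sg S ix * sg T ix"
  have ixB: "ix \<in> B" using ix by (simp add: B_def)
  have finB: "finite B" and finC: "finite C" by (simp_all add: B_def C_def)
  have DD: "DD S T = B \<union> C" using ix by (auto simp: DD_def S_def T_def A_def B_def C_def)
  have BC: "B \<inter> C = {}" by (auto simp: B_def C_def)
  have "Phi g S T = 0" by (rule Phi_zero[OF anti]) (simp_all add: S_def T_def A_def C_def)
  then have phi: "t ix + (\<Sum>j\<in>B - {ix}. t j) + (\<Sum>j\<in>C. t j) = 0"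
    unfolding Phi_def DD t_def[symmetric]
    by (simp add: sum.union_disjoint[OF finB finC BC] sum.remove[OF finB ixB])
  have "lam * lam = (sg S ix * sg S ix) * (sg T ix * sg T ix)" by (simp add: lam_def mult_ac)
  then have "lam * lam = 1" by (simp add: sg_sq)
  then have lsq: "(of_int lam :: 'r) * of_int lam = 1"
    by (metis of_int_1 of_int_mult)
  have tix: "t ix = of_int lam * (Q g {0..<a+b} * Q g (A \<union> C))"
  proof -
    have "tog S ix = {0..<a+b}" using ix by (auto simp: tog_def S_def)
    moreover have "tog T ix = A \<union> C" using ix by (auto simp: tog_def T_def A_def C_def)
    ultimately show ?thesis by (simp add: t_def lam_def mult_ac)
  qed
  have rB: "(\<Sum>j\<in>B. of_int (if j = ix then 0 else sg (B - {ix} - {j}) j * sg (B - {ix}) ix)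
        * Q g ({0..<a+b} - {ix} - {j})
        * (of_int (sg (A \<union> C) j * sg (insert j (A \<union> C)) ix) * Q g (insert ix (insert j (A \<union> C)))))
      = - of_int lam * (\<Sum>j\<in>B - {ix}. t j)"
    (is "(\<Sum>j\<in>B. ?F j) = _")
  proof -
    have "(\<Sum>j\<in>B. ?F j) = ?F ix + (\<Sum>j\<in>B - {ix}. ?F j)" by (rule sum.remove[OF finB ixB])
    also have "?F ix = 0" by simp
    also have "(\<Sum>j\<in>B - {ix}. ?F j) = (\<Sum>j\<in>B - {ix}. - of_int lam * t j)"
    proof (rule sum.cong[OF refl])
      fix j assume jB: "j \<in> B - {ix}"
      then have j: "a \<le> j" "j < a + b" "j \<noteq> ix" by (auto simp: B_def)
      have s: "sg (B - {ix} - {j}) j * sg (B - {ix}) ix * (sg (A \<union> C) j * sg (insert j (A \<union> C)) ix)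
           = - (lam * (sg S j * sg T j))"
        using sign_B[OF ix j, of c] by (simp add: A_def B_def C_def S_def T_def lam_def)
      have t1: "tog S j = {0..<a+b} - {ix} - {j}" using j by (auto simp: tog_def S_def)
      have t2: "tog T j = insert ix (insert j (A \<union> C))" using j by (auto simp: tog_def T_def A_def C_def)
      have "?F j = of_int (sg (B - {ix} - {j}) j * sg (B - {ix}) ix * (sg (A \<union> C) j * sg (insert j (A \<union> C)) ix))
           * (Q g ({0..<a+b} - {ix} - {j}) * Q g (insert ix (insert j (A \<union> C))))"
        using j by (simp add: mult_ac)
      also have "\<dots> = - of_int lam * t j"
        unfolding s t_def t1 t2 by (simp add: mult_ac)
      finally show "?F j = - of_int lam * t j" .
    qed
    finally show ?thesis by (simp add: sum_distrib_left)
  qed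
  have rC: "(\<Sum>j\<in>C. of_int (sg (B - {ix}) ix) * of_int (sg (C - {j}) j)
        * (of_int (sg (B - {ix}) j) * Q g (A \<union> insert j (B - {ix})))
        * (of_int (sg (C - {j}) ix) * Q g (A \<union> insert ix (C - {j}))))
      = - of_int lam * (\<Sum>j\<in>C. t j)"
    (is "(\<Sum>j\<in>C. ?F j) = _")
  proof -
    have "(\<Sum>j\<in>C. ?F j) = (\<Sum>j\<in>C. - of_int lam * t j)"
    proof (rule sum.cong[OF refl])
      fix j assume jC: "j \<in> C"
      then have j: "a + b \<le> j" "j < a + b + c" by (auto simp: C_def)
      have s: "sg (B - {ix}) ix * sg (C - {j}) j * (sg (B - {ix}) j * sg (C - {j}) ix)
           = - (lam * (sg S j * sg T j))"
        using sign_C[OF ix j] by (simp add: A_def B_def C_def S_def T_def lam_def)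
      have t1: "tog S j = A \<union> insert j (B - {ix})" using j ix by (auto simp: tog_def S_def A_def B_def)
      have t2: "tog T j = A \<union> insert ix (C - {j})" using j ix by (auto simp: tog_def T_def A_def C_def)
      have "?F j = of_int (sg (B - {ix}) ix * sg (C - {j}) j * (sg (B - {ix}) j * sg (C - {j}) ix))
           * (Q g (A \<union> insert j (B - {ix})) * Q g (A \<union> insert ix (C - {j})))"
        by (simp add: mult_ac)
      also have "\<dots> = - of_int lam * t j"
        unfolding s t_def t1 t2 by (simp add: mult_ac)
      finally show "?F j = - of_int lam * t j" .
    qed
    then show ?thesis by (simp add: sum_distrib_left)
  qed
  have "Q g {0..<a+b} * Q g (A \<union> C) = of_int lam * t ix"
    unfolding tix by (simp add: mult.assoc[symmetric] lsq)
  also have "t ix = - ((\<Sum>j\<in>B - {ix}. t j) + (\<Sum>j\<in>C. t j))"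
    using phi by (subst eq_neg_iff_add_eq_0) (simp add: add.assoc)
  finally show ?thesis unfolding rB rC by (simp add: algebra_simps)
qed


declare sorted_list_of_set_insert_remove[simp del]

lemma sl_sorted: "sorted_wrt (<) l \<Longrightarrow> sl (set l) = l"
  by (metis sorted_distinct_set_unique strict_sorted_iff sorted_sorted_list_of_set
      distinct_sorted_list_of_set set_sorted_list_of_set finite_set)

lemma P_sorted: "sorted_wrt (<) l \<Longrightarrow> P g l = Q g (set l)"
  by (simp add: Q_def sl_sorted)

lemma map_idx_self: "distinct U \<Longrightarrow> map (idx U) U = [0..<length U]"
  by (rule nth_equalityI) (simp_all add: idx_nth)

lemma map_idx_parts:
  assumes d: "distinct (\<alpha> @ \<beta> @ \<gamma>)"
  shows "map (idx (\<alpha> @ \<beta> @ \<gamma>)) \<alpha> = [0..<length \<alpha>]"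
    and "map (idx (\<alpha> @ \<beta> @ \<gamma>)) \<beta> = [length \<alpha>..<length \<alpha> + length \<beta>]"
    and "map (idx (\<alpha> @ \<beta> @ \<gamma>)) \<gamma> = [length \<alpha> + length \<beta>..<length \<alpha> + length \<beta> + length \<gamma>]"
proof -
  define k where "k = idx (\<alpha> @ \<beta> @ \<gamma>)"
  have "map k (\<alpha> @ \<beta> @ \<gamma>) = [0..<length \<alpha> + length \<beta> + length \<gamma>]"
    using map_idx_self[OF d] by (simp add: k_def add.assoc)
  also have "\<dots> = [0..<length \<alpha> + length \<beta>] @ [length \<alpha> + length \<beta>..<length \<alpha> + length \<beta> + length \<gamma>]"
    by (rule upt_add_eq_append) simp
  also have "[0..<length \<alpha> + length \<beta>] = [0..<length \<alpha>] @ [length \<alpha>..<length \<alpha> + length \<beta>]"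
    by (rule upt_add_eq_append) simp
  finally have e: "map k \<alpha> @ map k \<beta> @ map k \<gamma> = [0..<length \<alpha>] @ [length \<alpha>..<length \<alpha> + length \<beta>] @ [length \<alpha> + length \<beta>..<length \<alpha> + length \<beta> + length \<gamma>]"
    by simp
  then have e1: "map k \<alpha> = [0..<length \<alpha>]" and e2: "map k \<beta> @ map k \<gamma> = [length \<alpha>..<length \<alpha> + length \<beta>] @ [length \<alpha> + length \<beta>..<length \<alpha> + length \<beta> + length \<gamma>]"
    by (simp_all add: append_eq_append_conv)
  from e2 have "map k \<beta> = [length \<alpha>..<length \<alpha> + length \<beta>]" and "map k \<gamma> = [length \<alpha> + length \<beta>..<length \<alpha> + length \<beta> + length \<gamma>]"
    by (simp_all add: append_eq_append_conv)
  with e1 show "map (idx (\<alpha> @ \<beta> @ \<gamma>)) \<alpha> = [0..<length \<alpha>]"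
    and "map (idx (\<alpha> @ \<beta> @ \<gamma>)) \<beta> = [length \<alpha>..<length \<alpha> + length \<beta>]"
    and "map (idx (\<alpha> @ \<beta> @ \<gamma>)) \<gamma> = [length \<alpha> + length \<beta>..<length \<alpha> + length \<beta> + length \<gamma>]"
    by (simp_all add: k_def)
qed

lemma inj_idx: "inj_on (idx U) (set U)"
  by (meson idx_inj inj_onI)

lemma pf_U:
  assumes dU: "distinct U" and dw: "distinct w" and sw: "set w \<subseteq> set U"
  shows "pf f w = P (\<lambda>i j. f (U ! i) (U ! j)) (map (idx U) w)"
proof -
  have "map ((!) U) (map (idx U) w) = w"
    using sw by (induction w) (auto simp: nth_idx)
  moreover have "inj_on ((!) U) (set (map (idx U) w))"
    using sw by (intro inj_on_nth[OF dU]) (auto simp: idx_less)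
  ultimately show ?thesis using pf_eq_P[OF dw, of f] P_map[of "(!) U" "map (idx U) w" f] by simp
qed

lemma map_wdel_sl:
  assumes inj: "inj_on k (set \<delta>)" and sd: "set d \<subseteq> set \<delta>" and m: "map k \<delta> = sl D" and fD: "finite D"
  shows "map k (wdel \<delta> d) = sl (D - k ` set d)"
proof -
  have "map k (wdel \<delta> d) = map k (filter (\<lambda>z. z \<notin> set d) \<delta>)" by (simp add: wdel_def)
  also have "filter (\<lambda>z. z \<notin> set d) \<delta> = filter ((\<lambda>i. i \<notin> k ` set d) \<circ> k) \<delta>"
  proof (rule filter_cong[OF refl])
    fix z assume "z \<in> set \<delta>"
    then show "(z \<notin> set d) = ((\<lambda>i. i \<notin> k ` set d) \<circ> k) z"
      using inj sd by (auto simp: inj_on_def)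
  qed
  also have "map k (filter ((\<lambda>i. i \<notin> k ` set d) \<circ> k) \<delta>) = filter (\<lambda>i. i \<notin> k ` set d) (map k \<delta>)"
    by (simp add: filter_map)
  also have "\<dots> = filter (\<lambda>i. i \<notin> k ` set d) (sl D)" using m by simp
  also have "\<dots> = sl (set (filter (\<lambda>i. i \<notin> k ` set d) (sl D)))"
    by (rule sl_sorted[symmetric]) (simp add: sorted_wrt_filter)
  also have "set (filter (\<lambda>i. i \<notin> k ` set d) (sl D)) = D - k ` set d" using fD by auto
  finally show ?thesis .
qed

lemma ssign1:
  assumes d: "distinct \<delta>" and inj: "inj_on k (set \<delta>)" and m: "map k \<delta> = sl D" and fD: "finite D"
    and v: "v \<in> set \<delta>"
  shows "ssign \<delta> [v] = sg (D - {k v}) (k v)"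
proof -
  have ok: "okp \<delta> (v # wdel \<delta> [v])" using d v by (auto simp: okp_def wdel_def)
  have kv: "k v \<in> D" using m v fD by (metis image_eqI list.set_map set_sorted_list_of_set)
  have "ssign \<delta> [v] = rearr_sign \<delta> (v # wdel \<delta> [v])" using d v by (simp add: ssign_def)
  also have "\<dots> = rearr_sign (map k \<delta>) (map k (v # wdel \<delta> [v]))" using rs_map[OF ok inj] by simp
  also have "map k (v # wdel \<delta> [v]) = k v # sl (D - {k v})"
    using map_wdel_sl[OF inj _ m fD, of "[v]"] v by simp
  also have "rearr_sign (map k \<delta>) (k v # sl (D - {k v})) = sg (D - {k v}) (k v) * rearr_sign (sl D) (sl (insert (k v) (D - {k v})))"
    using rs_insert[of "D - {k v}" "k v" "sl D" "[]"] fD m kv by (simp add: okp_def insert_absorb)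
  also have "insert (k v) (D - {k v}) = D" using kv by auto
  finally show ?thesis by (simp add: rs_refl)
qed

lemma ssign2:
  assumes d: "distinct \<delta>" and inj: "inj_on k (set \<delta>)" and m: "map k \<delta> = sl D" and fD: "finite D"
    and v: "v \<in> set \<delta>" and w: "w \<in> set \<delta>" and vw: "v \<noteq> w"
  shows "ssign \<delta> [v, w] = sg (D - {k v} - {k w}) (k w) * sg (D - {k v}) (k v)"
proof -
  have ok: "okp \<delta> (v # w # wdel \<delta> [v, w])" using d v w vw by (auto simp: okp_def wdel_def)
  have kv: "k v \<in> D" "k w \<in> D" using m v w fD by (metis image_eqI list.set_map set_sorted_list_of_set)+
  have kvw: "k v \<noteq> k w" using inj v w vw by (auto simp: inj_on_def)
  have "ssign \<delta> [v, w] = rearr_sign \<delta> (v # w # wdel \<delta> [v, w])" using d v w vw by (simp add: ssign_def)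
  also have "\<dots> = rearr_sign (map k \<delta>) (map k (v # w # wdel \<delta> [v, w]))" using rs_map[OF ok inj] by simp
  also have "map k (v # w # wdel \<delta> [v, w]) = k v # k w # sl (D - {k v} - {k w})"
    using map_wdel_sl[OF inj _ m fD, of "[v, w]"] v w by (simp add: Diff_insert2[symmetric] insert_commute)
  also have "rearr_sign (map k \<delta>) (k v # k w # sl (D - {k v} - {k w})) =
      sg (D - {k v} - {k w}) (k w) * rearr_sign (sl D) (k v # sl (insert (k w) (D - {k v} - {k w})))"
    using rs_insert[of "D - {k v} - {k w}" "k w" "sl D" "[k v]"] fD m kv kvw by (auto simp: okp_def)
  also have "insert (k w) (D - {k v} - {k w}) = D - {k v}" using kv kvw by auto
  also have "rearr_sign (sl D) (k v # sl (D - {k v})) = sg (D - {k v}) (k v) * rearr_sign (sl D) (sl (insert (k v) (D - {k v})))"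
    using rs_insert[of "D - {k v}" "k v" "sl D" "[]"] fD m kv by (simp add: okp_def insert_absorb)
  also have "insert (k v) (D - {k v}) = D" using kv by auto
  finally show ?thesis by (simp add: rs_refl)
qed

lemma P_pre_insert:
  fixes g :: "nat \<Rightarrow> nat \<Rightarrow> 'r::comm_ring_1"
  assumes anti: "\<forall>u v. g u v = - g v u" and fin: "finite S" and z: "z \<notin> S"
    and ge: "\<forall>s\<in>S. a \<le> s" and za: "a \<le> z"
  shows "P g ([0..<a] @ z # sl S) = of_int (sg S z) * Q g ({0..<a} \<union> insert z S)"
proof -
  have d: "distinct ([0..<a] @ z # sl S)" using fin z ge za by auto
  have "P g ([0..<a] @ z # sl S) = of_int (sg S z) * P g ([0..<a] @ sl (insert z S))"
    by (rule P_insert[OF anti fin z d])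
  also have "P g ([0..<a] @ sl (insert z S)) = Q g ({0..<a} \<union> insert z S)"
  proof -
    have "sorted_wrt (<) ([0..<a] @ sl (insert z S))"
      using fin ge za by (auto simp: sorted_wrt_append)
    then show ?thesis using fin by (simp add: P_sorted)
  qed
  finally show ?thesis .
qed


declare sorted_list_of_set_insert[simp del] sorted_list_of_set_insert_remove[simp del]

lemma P_two:
  fixes g :: "nat \<Rightarrow> nat \<Rightarrow> 'r::comm_ring_1"
  assumes anti: "\<forall>u v. g u v = - g v u" and fin: "finite S"
    and z: "z1 \<notin> S" "z2 \<notin> S" "z1 \<noteq> z2"
  shows "P g (sl S @ [z1, z2]) = of_int (sg S z2 * sg (insert z2 S) z1) * Q g (insert z1 (insert z2 S))"
proof -
  define s where "s = sl S"
  have ds: "distinct s" "set s = S" using fin by (simp_all add: s_def)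
  have m1: "(-1::'r) ^ (length s + 1) * (-1) ^ (length s + 1) = 1"
    by (simp add: power_mult_distrib[symmetric])
  have "P g ((s @ [z1]) @ z2 # []) = (-1) ^ length (s @ [z1]) * P g (z2 # (s @ [z1]) @ [])"
    using P_front[OF anti, of "[]" "s @ [z1]" z2 "[]"] ds z by simp
  moreover have "P g ((z2 # s) @ z1 # []) = (-1) ^ length (z2 # s) * P g (z1 # (z2 # s) @ [])"
    using P_front[OF anti, of "[]" "z2 # s" z1 "[]"] ds z by simp
  ultimately have e1: "P g (s @ [z1, z2]) = P g (z1 # z2 # s)"
    using m1 by (simp add: mult.assoc[symmetric])
  have "P g ([z1] @ z2 # sl S) = of_int (sg S z2) * P g ([z1] @ sl (insert z2 S))"
    by (rule P_insert[OF anti fin z(2)]) (use fin z in auto)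
  moreover have "P g ([] @ z1 # sl (insert z2 S)) = of_int (sg (insert z2 S) z1) * P g ([] @ sl (insert z1 (insert z2 S)))"
    by (rule P_insert[OF anti]) (use fin z in auto)
  ultimately show ?thesis using e1 by (simp add: s_def Q_def mult.assoc)
qed


theorem mainTheorem13:
  fixes f :: "'a \<Rightarrow> 'a \<Rightarrow> 'r::comm_ring_1"
    and \<alpha> \<beta> \<gamma> :: "'a list" and x :: 'a
  assumes antisym: "\<forall>u v. f u v = - f v u"
    and diag: "\<forall>u. f u u = 0"
    and dist: "distinct (\<alpha> @ \<beta> @ \<gamma>)"
    and x_in: "x \<in> set \<beta>"
  shows "pf f (\<alpha> @ \<beta>) * pf f (\<alpha> @ \<gamma>) =
     (\<Sum>y\<in>set \<beta>. of_int (ssign \<beta> [x, y]) * pf f (wdel (\<alpha> @ \<beta>) [x, y]) * pf f (\<alpha> @ \<gamma> @ [x, y]))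
   + (\<Sum>y\<in>set \<gamma>. of_int (ssign \<beta> [x]) * of_int (ssign \<gamma> [y])
        * pf f (\<alpha> @ [y] @ wdel \<beta> [x]) * pf f (\<alpha> @ [x] @ wdel \<gamma> [y]))"
proof -
  define U where "U = \<alpha> @ \<beta> @ \<gamma>"
  define a where "a = length \<alpha>"
  define b where "b = length \<beta>"
  define c where "c = length \<gamma>"
  define k where "k = idx U"
  define g where "g = (\<lambda>i j. f (U ! i) (U ! j))"
  have anti: "\<forall>u v. g u v = - g v u" unfolding g_def using antisym by blast
  have dU: "distinct U" using dist by (simp add: U_def)
  have lenU: "length U = a + b + c" by (simp add: U_def a_def b_def c_def)
  have injU: "inj_on k (set U)" unfolding k_def by (rule inj_idx)
  have ma: "map k \<alpha> = [0..<a]" and mb: "map k \<beta> = [a..<a+b]" and mc: "map k \<gamma> = [a+b..<a+b+c]"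
    using map_idx_parts[OF dist] by (simp_all add: k_def U_def a_def b_def c_def)
  have pfU: "pf f w = P g (map k w)" if "distinct w" "set w \<subseteq> set U" for w
    using pf_U[OF dU that] by (simp add: g_def k_def)
  have kU: "k (U ! j) = j" if "j < a + b + c" for j
    using idx_nth[OF dU] that lenU by (simp add: k_def)
  have Uk: "U ! k v = v" if "v \<in> set U" for v
    using nth_idx[OF that] by (simp add: k_def)
  have setb: "set \<beta> = (!) U ` {a..<a+b}"
  proof -
    have "map ((!) U) (map k \<beta>) = \<beta>" unfolding map_map
      by (rule map_idI) (use Uk in \<open>auto simp: U_def\<close>)
    then show ?thesis using mb by (metis list.set_map set_upt)
  qed
  have setc: "set \<gamma> = (!) U ` {a+b..<a+b+c}"
  proof -
    have "map ((!) U) (map k \<gamma>) = \<gamma>" unfolding map_map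
      by (rule map_idI) (use Uk in \<open>auto simp: U_def\<close>)
    then show ?thesis using mc by (metis list.set_map set_upt)
  qed
  define ix where "ix = k x"
  have ixr: "a \<le> ix" "ix < a + b"
  proof -
    have "ix \<in> set (map k \<beta>)" using x_in by (simp add: ix_def)
    then show "a \<le> ix" "ix < a + b" using mb by auto
  qed
  define A where "A = {0..<a}"
  define B where "B = {a..<a+b}"
  define C where "C = {a+b..<a+b+c}"
  have mab: "map k (\<alpha> @ \<beta>) = sl {0..<a+b}"
    using ma mb by (simp add: upt_add_eq_append[symmetric])
  have slAC: "sl (A \<union> C) = [0..<a] @ [a+b..<a+b+c]"
  proof -
    have "sorted_wrt (<) ([0..<a] @ [a+b..<a+b+c])" by (auto simp: sorted_wrt_append)
    then have "sl (set ([0..<a] @ [a+b..<a+b+c])) = [0..<a] @ [a+b..<a+b+c]" by (rule sl_sorted)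
    then show ?thesis by (simp add: A_def C_def)
  qed
  have mac: "map k (\<alpha> @ \<gamma>) = sl (A \<union> C)" using ma mc slAC by simp
  have subU: "set \<alpha> \<subseteq> set U" "set \<beta> \<subseteq> set U" "set \<gamma> \<subseteq> set U" by (auto simp: U_def)
  have dab: "distinct (\<alpha> @ \<beta>)" "distinct (\<alpha> @ \<gamma>)" using dist by auto
  have sab: "set (\<alpha> @ \<beta>) \<subseteq> set U" "set (\<alpha> @ \<gamma>) \<subseteq> set U" using subU by auto
  have T1: "pf f (\<alpha> @ \<beta>) = Q g {0..<a+b}"
    using pfU[OF dab(1) sab(1)] mab by (simp add: Q_def)
  have T2: "pf f (\<alpha> @ \<gamma>) = Q g (A \<union> C)"
    using pfU[OF dab(2) sab(2)] mac by (simp add: Q_def)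
  have S1: "(\<Sum>y\<in>set \<beta>. of_int (ssign \<beta> [x, y]) * pf f (wdel (\<alpha> @ \<beta>) [x, y]) * pf f (\<alpha> @ \<gamma> @ [x, y])) =
    (\<Sum>j\<in>B. of_int (if j = ix then 0 else sg (B - {ix} - {j}) j * sg (B - {ix}) ix)
        * Q g ({0..<a+b} - {ix} - {j})
        * (of_int (sg (A \<union> C) j * sg (insert j (A \<union> C)) ix) * Q g (insert ix (insert j (A \<union> C)))))"
  proof -
    have inj: "inj_on ((!) U) B"
      by (rule inj_on_nth[OF dU]) (auto simp: B_def lenU)
    have "(\<Sum>y\<in>set \<beta>. of_int (ssign \<beta> [x, y]) * pf f (wdel (\<alpha> @ \<beta>) [x, y]) * pf f (\<alpha> @ \<gamma> @ [x, y]))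
       = (\<Sum>j\<in>B. of_int (ssign \<beta> [x, U ! j]) * pf f (wdel (\<alpha> @ \<beta>) [x, U ! j]) * pf f (\<alpha> @ \<gamma> @ [x, U ! j]))"
      unfolding setb B_def[symmetric] by (rule sum.reindex[OF inj, unfolded comp_def])
    also have "\<dots> = (\<Sum>j\<in>B. of_int (if j = ix then 0 else sg (B - {ix} - {j}) j * sg (B - {ix}) ix)
        * Q g ({0..<a+b} - {ix} - {j})
        * (of_int (sg (A \<union> C) j * sg (insert j (A \<union> C)) ix) * Q g (insert ix (insert j (A \<union> C)))))"
    proof (rule sum.cong[OF refl])
      fix j assume jB: "j \<in> B"
      define y where "y = U ! j"
      have jr: "a \<le> j" "j < a + b" using jB by (auto simp: B_def)
      have ky: "k y = j" using jr kU by (simp add: y_def)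
      have yb: "y \<in> set \<beta>" using jB setb by (auto simp: y_def B_def)
      show "of_int (ssign \<beta> [x, U ! j]) * pf f (wdel (\<alpha> @ \<beta>) [x, U ! j]) * pf f (\<alpha> @ \<gamma> @ [x, U ! j]) =
        of_int (if j = ix then 0 else sg (B - {ix} - {j}) j * sg (B - {ix}) ix)
        * Q g ({0..<a+b} - {ix} - {j})
        * (of_int (sg (A \<union> C) j * sg (insert j (A \<union> C)) ix) * Q g (insert ix (insert j (A \<union> C))))"
      proof (cases "j = ix")
        case True
        then have "y = x" using ky injU yb x_in subU by (auto simp: ix_def inj_on_def)
        then have "ssign \<beta> [x, U ! j] = 0" by (simp add: y_def ssign_def)
        then show ?thesis using True by simp
      next
        case False
        then have xy: "x \<noteq> y" using ky ix_def by auto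
        have mbB: "map k \<beta> = sl B" using mb by (simp add: B_def)
        have injb: "inj_on k (set \<beta>)" using injU subU inj_on_subset by blast
        have e1: "ssign \<beta> [x, y] = sg (B - {ix} - {j}) j * sg (B - {ix}) ix"
          using ssign2[OF _ injb mbB _ x_in yb xy] dist ky by (simp add: ix_def B_def)
        have injab: "inj_on k (set (\<alpha> @ \<beta>))" using injU subU inj_on_subset by (metis Un_least set_append)
        have "map k (wdel (\<alpha> @ \<beta>) [x, y]) = sl ({0..<a+b} - k ` set [x, y])"
          by (rule map_wdel_sl[OF injab _ mab]) (use x_in yb in auto)
        also have "{0..<a+b} - k ` set [x, y] = {0..<a+b} - {ix} - {j}" using ky by (auto simp: ix_def)
        finally have mw: "map k (wdel (\<alpha> @ \<beta>) [x, y]) = sl ({0..<a+b} - {ix} - {j})" .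
        have e2: "pf f (wdel (\<alpha> @ \<beta>) [x, y]) = Q g ({0..<a+b} - {ix} - {j})"
        proof -
          have dw: "distinct (wdel (\<alpha> @ \<beta>) [x, y])" using dab(1) by (auto simp: wdel_def)
          have sw: "set (wdel (\<alpha> @ \<beta>) [x, y]) \<subseteq> set U" using sab(1) by (auto simp: wdel_def)
          show ?thesis using pfU[OF dw sw] mw by (simp add: Q_def)
        qed
        have "map k (\<alpha> @ \<gamma> @ [x, y]) = sl (A \<union> C) @ [ix, j]"
          using mac ky by (simp add: ix_def)
        moreover have "distinct (\<alpha> @ \<gamma> @ [x, y])" using dist x_in yb xy by auto
        moreover have "set (\<alpha> @ \<gamma> @ [x, y]) \<subseteq> set U" using subU x_in yb by auto
        ultimately have "pf f (\<alpha> @ \<gamma> @ [x, y]) = P g (sl (A \<union> C) @ [ix, j])" using pfU by metis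
        also have "\<dots> = of_int (sg (A \<union> C) j * sg (insert j (A \<union> C)) ix) * Q g (insert ix (insert j (A \<union> C)))"
          by (rule P_two[OF anti]) (use ixr jr False in \<open>auto simp: A_def C_def\<close>)
        finally have e3: "pf f (\<alpha> @ \<gamma> @ [x, y]) = of_int (sg (A \<union> C) j * sg (insert j (A \<union> C)) ix) * Q g (insert ix (insert j (A \<union> C)))" .
        show ?thesis using e1 e2 e3 False by (simp add: y_def)
      qed
    qed
    finally show ?thesis .
  qed
  have S2: "(\<Sum>y\<in>set \<gamma>. of_int (ssign \<beta> [x]) * of_int (ssign \<gamma> [y])
        * pf f (\<alpha> @ [y] @ wdel \<beta> [x]) * pf f (\<alpha> @ [x] @ wdel \<gamma> [y])) =
     (\<Sum>j\<in>C. of_int (sg (B - {ix}) ix) * of_int (sg (C - {j}) j)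
        * (of_int (sg (B - {ix}) j) * Q g (A \<union> insert j (B - {ix})))
        * (of_int (sg (C - {j}) ix) * Q g (A \<union> insert ix (C - {j}))))"
  proof -
    have inj: "inj_on ((!) U) C"
      by (rule inj_on_nth[OF dU]) (auto simp: C_def lenU)
    have mbB: "map k \<beta> = sl B" using mb by (simp add: B_def)
    have mcC: "map k \<gamma> = sl C" using mc by (simp add: C_def)
    have injb: "inj_on k (set \<beta>)" using injU subU inj_on_subset by blast
    have injc: "inj_on k (set \<gamma>)" using injU subU inj_on_subset by blast
    have sx: "ssign \<beta> [x] = sg (B - {ix}) ix"
      using ssign1[OF _ injb mbB _ x_in] dist by (simp add: ix_def B_def)
    have mwb: "map k (wdel \<beta> [x]) = sl (B - {ix})"
      using map_wdel_sl[OF injb _ mbB, of "[x]"] x_in by (simp add: ix_def B_def)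
    have "(\<Sum>y\<in>set \<gamma>. of_int (ssign \<beta> [x]) * of_int (ssign \<gamma> [y])
        * pf f (\<alpha> @ [y] @ wdel \<beta> [x]) * pf f (\<alpha> @ [x] @ wdel \<gamma> [y]))
       = (\<Sum>j\<in>C. of_int (ssign \<beta> [x]) * of_int (ssign \<gamma> [U ! j])
        * pf f (\<alpha> @ [U ! j] @ wdel \<beta> [x]) * pf f (\<alpha> @ [x] @ wdel \<gamma> [U ! j]))"
      unfolding setc C_def[symmetric] by (rule sum.reindex[OF inj, unfolded comp_def])
    also have "\<dots> = (\<Sum>j\<in>C. of_int (sg (B - {ix}) ix) * of_int (sg (C - {j}) j)
        * (of_int (sg (B - {ix}) j) * Q g (A \<union> insert j (B - {ix})))
        * (of_int (sg (C - {j}) ix) * Q g (A \<union> insert ix (C - {j}))))"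
    proof (rule sum.cong[OF refl])
      fix j assume jC: "j \<in> C"
      define y where "y = U ! j"
      have jr: "a + b \<le> j" "j < a + b + c" using jC by (auto simp: C_def)
      have ky: "k y = j" using jr kU by (simp add: y_def)
      have yc: "y \<in> set \<gamma>" using jC setc by (auto simp: y_def C_def)
      have sy: "ssign \<gamma> [y] = sg (C - {j}) j"
        using ssign1[OF _ injc mcC _ yc] dist ky by (simp add: C_def)
      have mwc: "map k (wdel \<gamma> [y]) = sl (C - {j})"
        using map_wdel_sl[OF injc _ mcC, of "[y]"] yc ky by (simp add: C_def)
      have xy: "x \<noteq> y" using dist x_in yc by auto
      have d1: "distinct (\<alpha> @ [y] @ wdel \<beta> [x])" using dist yc x_in by (auto simp: wdel_def)
      have s1: "set (\<alpha> @ [y] @ wdel \<beta> [x]) \<subseteq> set U" using subU yc by (auto simp: wdel_def)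
      have "pf f (\<alpha> @ [y] @ wdel \<beta> [x]) = P g ([0..<a] @ j # sl (B - {ix}))"
        using pfU[OF d1 s1] ma mwb ky by simp
      also have "\<dots> = of_int (sg (B - {ix}) j) * Q g (A \<union> insert j (B - {ix}))"
        unfolding A_def by (rule P_pre_insert[OF anti]) (use jr in \<open>auto simp: B_def\<close>)
      finally have e1: "pf f (\<alpha> @ [y] @ wdel \<beta> [x]) = of_int (sg (B - {ix}) j) * Q g (A \<union> insert j (B - {ix}))" .
      have d2: "distinct (\<alpha> @ [x] @ wdel \<gamma> [y])" using dist yc x_in by (auto simp: wdel_def)
      have s2: "set (\<alpha> @ [x] @ wdel \<gamma> [y]) \<subseteq> set U" using subU x_in by (auto simp: wdel_def)
      have "pf f (\<alpha> @ [x] @ wdel \<gamma> [y]) = P g ([0..<a] @ ix # sl (C - {j}))"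
        using pfU[OF d2 s2] ma mwc by (simp add: ix_def)
      also have "\<dots> = of_int (sg (C - {j}) ix) * Q g (A \<union> insert ix (C - {j}))"
        unfolding A_def by (rule P_pre_insert[OF anti]) (use ixr in \<open>auto simp: C_def\<close>)
      finally have e2: "pf f (\<alpha> @ [x] @ wdel \<gamma> [y]) = of_int (sg (C - {j}) ix) * Q g (A \<union> insert ix (C - {j}))" .
      show "of_int (ssign \<beta> [x]) * of_int (ssign \<gamma> [U ! j])
        * pf f (\<alpha> @ [U ! j] @ wdel \<beta> [x]) * pf f (\<alpha> @ [x] @ wdel \<gamma> [U ! j]) =
        of_int (sg (B - {ix}) ix) * of_int (sg (C - {j}) j)
        * (of_int (sg (B - {ix}) j) * Q g (A \<union> insert j (B - {ix})))
        * (of_int (sg (C - {j}) ix) * Q g (A \<union> insert ix (C - {j})))"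
        using sx sy e1 e2 by (simp add: y_def)
    qed
    finally show ?thesis .
  qed
  show ?thesis
    unfolding T1 T2 S1 S2 A_def B_def C_def
    by (rule nat_identity[OF anti ixr])
qed


end
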